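(* Let $\eta$ be a primitive $7$-th root of unity. Call a real polynomial $G(x,y,z)$ special if $G(\eta x,\eta^2y,\eta^4z)=G(x,y,z)$, $G=1$ on the plane $x+y+z=1$, $G$ has only non-negative coefficients, and $G(0,0,0)=0$. Let $G$ be special. If $\deg G=7$, then $N(G)=17$. There is no special $G$ of degree $8$ or $9$. If $\deg G=10$, then $N(G)=29$ or $N(G)=30$. If $\deg G=11$, then $N(G)\ge 31$.
   Context: $N(G)$ denotes the number of distinct monomials with nonzero coefficient in $G$. *)

theory Defs
  imports Complex_Main
begin

text \<open>A real polynomial G(x,y,z) in three variables is represented by its coefficient
  function c, where c i j k is the coefficient of x^i y^j z^k; it must have finite support.\<close>

type_synonym poly3 = "nat \<Rightarrow> nat \<Rightarrow> nat \<Rightarrow> real"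

definition supp3 :: "poly3 \<Rightarrow> (nat \<times> nat \<times> nat) set" where
  "supp3 c = {(i, j, k). c i j k \<noteq> 0}"

definition is_poly3 :: "poly3 \<Rightarrow> bool" where
  "is_poly3 c \<longleftrightarrow> finite (supp3 c)"

definition eval3 :: "poly3 \<Rightarrow> 'a::real_algebra_1 \<Rightarrow> 'a \<Rightarrow> 'a \<Rightarrow> 'a" where
  "eval3 c x y z = (\<Sum>(i, j, k)\<in>supp3 c. of_real (c i j k) * x ^ i * y ^ j * z ^ k)"

text \<open>Total degree (for a nonzero polynomial).\<close>
definition deg3 :: "poly3 \<Rightarrow> nat" where
  "deg3 c = Max ((\<lambda>(i, j, k). i + j + k) ` supp3 c)"

definition N3 :: "poly3 \<Rightarrow> nat" where
  "N3 c = card (supp3 c)"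

definition special :: "complex \<Rightarrow> poly3 \<Rightarrow> bool" where
  "special \<eta> c \<longleftrightarrow> is_poly3 c
     \<and> (\<forall>x y z :: complex. eval3 c (\<eta> * x) (\<eta>^2 * y) (\<eta>^4 * z) = eval3 c x y z)
     \<and> (\<forall>x y z :: real. x + y + z = 1 \<longrightarrow> eval3 c x y z = 1)
     \<and> (\<forall>i j k. c i j k \<ge> 0)
     \<and> eval3 c (0::real) 0 0 = 0"

end

theory Submission
  imports Defs "HOL-Computational_Algebra.Polynomial"
begin


lemma digits_inj:
  fixes D x y u v :: nat
  assumes "x < D" "y < D" "x + D * u = y + D * v"
  shows "x = y \<and> u = v"
proof -
  have "(x + D * u) mod D = x" using assms(1) by simp
  moreover have "(y + D * v) mod D = y" using assms(2) by simp
  ultimately have xy: "x = y" using assms(3) by metis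
  then have "D * u = D * v" using assms(3) by simp
  moreover have "D > 0" using assms(1) by simp
  ultimately show ?thesis using xy by simp
qed

lemma poly_coeff_zero:
  fixes w :: "'b \<Rightarrow> 'a::{ring_char_0,comm_ring_1,ring_no_zero_divisors}"
  assumes fin: "finite S" and inj: "inj_on \<phi> S"
    and H: "\<And>t. (\<Sum>m\<in>S. w m * t ^ \<phi> m) = 0" and m: "m \<in> S"
  shows "w m = 0"
proof -
  define P where "P = (\<Sum>m\<in>S. monom (w m) (\<phi> m))"
  have "\<forall>t. poly P t = 0" unfolding P_def poly_sum poly_monom using H by simp
  then have "P = 0" using poly_all_0_iff_0 by blast
  then have "coeff P (\<phi> m) = 0" by simp
  moreover have "coeff P (\<phi> m) = (\<Sum>m'\<in>S. if \<phi> m' = \<phi> m then w m' else 0)"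
    unfolding P_def coeff_sum by (simp add: eq_commute)
  moreover have "(\<Sum>m'\<in>S. if \<phi> m' = \<phi> m then w m' else 0) = (\<Sum>m'\<in>S. if m' = m then w m' else 0)"
    by (rule sum.cong) (use inj m in \<open>auto simp: inj_on_def\<close>)
  ultimately show ?thesis using fin m by simp
qed

lemma extract3:
  fixes w :: "nat \<times> nat \<times> nat \<Rightarrow> 'a::{ring_char_0,comm_ring_1,ring_no_zero_divisors}"
  assumes fin: "finite S" and bnd: "\<And>i j k. (i, j, k) \<in> S \<Longrightarrow> i < D \<and> j < D \<and> k < D"
    and H: "\<And>x y z. (\<Sum>(i, j, k)\<in>S. w (i, j, k) * x ^ i * y ^ j * z ^ k) = 0"
    and m: "m \<in> S"
  shows "w m = 0"
proof -
  define \<phi> where "\<phi> = (\<lambda>(i::nat, j::nat, k::nat). i + D * (j + D * k))"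
  have inj: "inj_on \<phi> S"
  proof (rule inj_onI)
    fix m1 m2 assume a: "m1 \<in> S" "m2 \<in> S" "\<phi> m1 = \<phi> m2"
    obtain i1 j1 k1 where m1: "m1 = (i1, j1, k1)" by (cases m1) auto
    obtain i2 j2 k2 where m2: "m2 = (i2, j2, k2)" by (cases m2) auto
    have b1: "i1 < D" "j1 < D" "k1 < D" using bnd a(1) m1 by auto
    have b2: "i2 < D" "j2 < D" "k2 < D" using bnd a(2) m2 by auto
    have "i1 = i2 \<and> j1 + D * k1 = j2 + D * k2"
      by (rule digits_inj[OF b1(1) b2(1)]) (use a(3) in \<open>simp add: \<phi>_def m1 m2\<close>)
    then show "m1 = m2" using digits_inj[OF b1(2) b2(2)] m1 m2 by auto
  qed
  have "(\<Sum>m\<in>S. w m * t ^ \<phi> m) = 0" for t :: 'a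
  proof -
    have "(\<Sum>m\<in>S. w m * t ^ \<phi> m) = (\<Sum>(i, j, k)\<in>S. w (i, j, k) * t ^ i * (t ^ D) ^ j * ((t ^ D) ^ D) ^ k)"
      by (rule sum.cong) (auto simp: \<phi>_def power_add power_mult[symmetric] mult.assoc algebra_simps)
    also have "\<dots> = 0" by (rule H)
    finally show ?thesis .
  qed
  then show ?thesis using poly_coeff_zero[OF fin inj _ m] by blast
qed



lemma root7_aux:
  fixes \<eta> :: complex
  assumes h7: "\<eta> ^ 7 = 1" and hr: "\<eta> ^ r = 1" and rs: "r * s = 7 * q + 1"
  shows "\<eta> = 1"
proof -
  have "\<eta> ^ (r * s) = (\<eta> ^ r) ^ s" by (rule power_mult)
  then have a: "\<eta> ^ (r * s) = 1" using hr by simp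
  have "\<eta> ^ (7 * q + 1) = (\<eta> ^ 7) ^ q * \<eta>" by (simp add: power_add power_mult)
  then have "\<eta> ^ (7 * q + 1) = \<eta>" using h7 by simp
  then have b: "\<eta> ^ (r * s) = \<eta>" unfolding rs .
  show ?thesis using a b by simp
qed

lemma root7:
  fixes \<eta> :: complex
  assumes h7: "\<eta> ^ 7 = 1" and h1: "\<eta> \<noteq> 1" and hn: "\<eta> ^ n = 1"
  shows "7 dvd n"
proof -
  define r where "r = n mod 7"
  have "n = 7 * (n div 7) + r" unfolding r_def by simp
  then have "\<eta> ^ n = \<eta> ^ (7 * (n div 7)) * \<eta> ^ r" by (metis power_add)
  also have "\<eta> ^ (7 * (n div 7)) = 1" using h7 by (simp add: power_mult)
  finally have r: "\<eta> ^ r = 1" using hn by simp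
  have "r < 7" unfolding r_def by simp
  then have c: "r = 0 \<or> r = 1 \<or> r = 2 \<or> r = 3 \<or> r = 4 \<or> r = 5 \<or> r = 6" by presburger
  have "r \<noteq> 1" using r h1 by auto
  moreover have "r \<noteq> 2"
  proof
    assume "r = 2" then have "\<eta> ^ 2 = 1" using r by simp
    from root7_aux[OF h7 this, of 4 1] h1 show False by simp
  qed
  moreover have "r \<noteq> 3"
  proof
    assume "r = 3" then have "\<eta> ^ 3 = 1" using r by simp
    from root7_aux[OF h7 this, of 5 2] h1 show False by simp
  qed
  moreover have "r \<noteq> 4"
  proof
    assume "r = 4" then have "\<eta> ^ 4 = 1" using r by simp
    from root7_aux[OF h7 this, of 2 1] h1 show False by simp
  qed
  moreover have "r \<noteq> 5"
  proof
    assume "r = 5" then have "\<eta> ^ 5 = 1" using r by simp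
    from root7_aux[OF h7 this, of 3 2] h1 show False by simp
  qed
  moreover have "r \<noteq> 6"
  proof
    assume "r = 6" then have "\<eta> ^ 6 = 1" using r by simp
    from root7_aux[OF h7 this, of 6 5] h1 show False by simp
  qed
  ultimately have "r = 0" using c by blast
  then show ?thesis unfolding r_def by auto
qed

lemma inv7:
  fixes \<eta> :: complex
  assumes sp: "special \<eta> G" and h7: "\<eta> ^ 7 = 1" and h1: "\<eta> \<noteq> 1" and m: "(i, j, k) \<in> supp3 G"
  shows "7 dvd (i + 2 * j + 4 * k)"
proof -
  let ?S = "supp3 G"
  have fin: "finite ?S" using sp by (simp add: special_def is_poly3_def)
  define D where "D = Suc (Max ((\<lambda>(i, j, k). i + j + k) ` ?S))"
  have bnd: "i' < D \<and> j' < D \<and> k' < D" if "(i', j', k') \<in> ?S" for i' j' k'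
  proof -
    have "(\<lambda>(i, j, k). i + j + k) (i', j', k') \<le> Max ((\<lambda>(i, j, k). i + j + k) ` ?S)"
    proof (rule Max_ge)
      show "finite ((\<lambda>(i, j, k). i + j + k) ` ?S)" using fin by simp
      show "(\<lambda>(i, j, k). i + j + k) (i', j', k') \<in> (\<lambda>(i, j, k). i + j + k) ` ?S"
        using that by (rule imageI)
    qed
    then show ?thesis unfolding D_def by auto
  qed
  define w where "w = (\<lambda>(i, j, k). (of_real (G i j k) :: complex) * (\<eta> ^ (i + 2 * j + 4 * k) - 1))"
  have H: "(\<Sum>(i, j, k)\<in>?S. w (i, j, k) * x ^ i * y ^ j * z ^ k) = 0" for x y z :: complex
  proof -
    have e: "eval3 G (\<eta> * x) (\<eta> ^ 2 * y) (\<eta> ^ 4 * z) = eval3 G x y z"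
      using sp by (simp add: special_def)
    have "(\<Sum>(i, j, k)\<in>?S. w (i, j, k) * x ^ i * y ^ j * z ^ k)
        = eval3 G (\<eta> * x) (\<eta> ^ 2 * y) (\<eta> ^ 4 * z) - eval3 G x y z"
      unfolding eval3_def sum_subtractf[symmetric]
    proof (rule sum.cong[OF refl])
      fix m :: "nat \<times> nat \<times> nat"
      obtain i j k where mm: "m = (i, j, k)" by (cases m) auto
      have p1: "(\<eta> * x) ^ i = \<eta> ^ i * x ^ i" by (simp add: power_mult_distrib)
      have p2: "(\<eta> ^ 2 * y) ^ j = \<eta> ^ (2 * j) * y ^ j" by (simp add: power_mult_distrib power_mult)
      have p3: "(\<eta> ^ 4 * z) ^ k = \<eta> ^ (4 * k) * z ^ k" by (simp add: power_mult_distrib power_mult)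
      have p4: "\<eta> ^ (i + 2 * j + 4 * k) = \<eta> ^ i * \<eta> ^ (2 * j) * \<eta> ^ (4 * k)" by (simp add: power_add)
      show "(case m of (i, j, k) \<Rightarrow> w (i, j, k) * x ^ i * y ^ j * z ^ k) =
        (case m of (i, j, k) \<Rightarrow> of_real (G i j k) * (\<eta> * x) ^ i * (\<eta> ^ 2 * y) ^ j * (\<eta> ^ 4 * z) ^ k) -
        (case m of (i, j, k) \<Rightarrow> of_real (G i j k) * x ^ i * y ^ j * z ^ k)"
        unfolding mm prod.case p1 p2 p3 w_def p4 by (simp add: algebra_simps)
    qed
    then show ?thesis using e by simp
  qed
  have "w (i, j, k) = 0" by (rule extract3[OF fin bnd H m])
  moreover have "G i j k \<noteq> 0" using m by (simp add: supp3_def)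
  ultimately have "\<eta> ^ (i + 2 * j + 4 * k) = 1" by (simp add: w_def)
  then show ?thesis by (rule root7[OF h7 h1])
qed

lemma zero_not_supp:
  assumes sp: "special \<eta> G"
  shows "(0, 0, 0) \<notin> supp3 G"
proof
  assume a: "(0, 0, 0) \<in> supp3 G"
  have fin: "finite (supp3 G)" using sp by (simp add: special_def is_poly3_def)
  have "eval3 G (0::real) 0 0 = (\<Sum>m\<in>supp3 G. if m = (0, 0, 0) then G 0 0 0 else 0)"
    unfolding eval3_def by (rule sum.cong) auto
  also have "\<dots> = G 0 0 0" using fin a by simp
  finally have "G 0 0 0 = 0" using sp by (simp add: special_def)
  then show False using a by (simp add: supp3_def)
qed



definition kap :: "nat \<Rightarrow> nat \<Rightarrow> nat \<Rightarrow> real" where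
  "kap k a b = (-1) ^ (a + b) * of_nat (k choose a) * of_nat ((k - a) choose b)"

definition EE :: "nat \<Rightarrow> nat \<Rightarrow> nat \<Rightarrow> nat \<Rightarrow> nat \<Rightarrow> real" where
  "EE i j k p q = (if i \<le> p \<and> j \<le> q \<and> (p - i) + (q - j) \<le> k then kap k (p - i) (q - j) else 0)"

lemma trinom:
  fixes x y :: real
  shows "(1 - x - y) ^ k = (\<Sum>a\<le>k. \<Sum>b\<le>k - a. kap k a b * x ^ a * y ^ b)"
proof -
  have "(1 - x - y) ^ k = ((-x) + (1 - y)) ^ k" by (simp add: algebra_simps)
  also have "\<dots> = (\<Sum>a\<le>k. of_nat (k choose a) * (-x) ^ a * (1 - y) ^ (k - a))"
    by (rule binomial_ring)
  also have "\<dots> = (\<Sum>a\<le>k. \<Sum>b\<le>k - a. kap k a b * x ^ a * y ^ b)"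
  proof (rule sum.cong[OF refl])
    fix a assume "a \<in> {..k}"
    have "(1 - y) ^ (k - a) = ((-y) + 1) ^ (k - a)" by simp
    also have "\<dots> = (\<Sum>b\<le>k - a. of_nat ((k - a) choose b) * (-y) ^ b * 1 ^ (k - a - b))"
      by (rule binomial_ring)
    finally have "of_nat (k choose a) * (-x) ^ a * (1 - y) ^ (k - a) =
       of_nat (k choose a) * (-x) ^ a * (\<Sum>b\<le>k - a. of_nat ((k - a) choose b) * (-y) ^ b)"
      by simp
    also have "\<dots> = (\<Sum>b\<le>k - a. kap k a b * x ^ a * y ^ b)"
      unfolding sum_distrib_left kap_def
      by (rule sum.cong[OF refl]) (simp add: power_minus' power_add algebra_simps)
    finally show "of_nat (k choose a) * (-x) ^ a * (1 - y) ^ (k - a) =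
       (\<Sum>b\<le>k - a. kap k a b * x ^ a * y ^ b)" .
  qed
  finally show ?thesis .
qed

lemma sum_if_eq_single:
  fixes g :: "nat \<Rightarrow> real"
  shows "(\<Sum>b\<le>n. if b = c \<and> P then g b else 0) = (if c \<le> n \<and> P then g c else 0)"
  by (cases P) (auto simp: sum.delta)

lemma EE_sum:
  assumes "i + k < D" "j + k < D" "p < D" "q < D"
  shows "(\<Sum>a\<le>k. \<Sum>b\<le>k - a. if (i + a) + D * (j + b) = p + D * q then kap k a b else 0) = EE i j k p q"
proof -
  have "(\<Sum>a\<le>k. \<Sum>b\<le>k - a. if (i + a) + D * (j + b) = p + D * q then kap k a b else 0)
     = (\<Sum>a\<le>k. \<Sum>b\<le>k - a. if b = q - j \<and> (i + a = p \<and> j \<le> q) then kap k a b else 0)"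
  proof (intro sum.cong refl)
    fix a b assume ab: "a \<in> {..k}" "b \<in> {..k - a}"
    have "i + a < D" using ab assms by auto
    then have "((i + a) + D * (j + b) = p + D * q) = (i + a = p \<and> j + b = q)"
      using digits_inj[of "i + a" D p "j + b" q] assms(3) by auto
    then show "(if (i + a) + D * (j + b) = p + D * q then kap k a b else 0)
        = (if b = q - j \<and> (i + a = p \<and> j \<le> q) then kap k a b else 0)" by auto
  qed
  also have "\<dots> = (\<Sum>a\<le>k. if a = p - i \<and> (i \<le> p \<and> j \<le> q \<and> q - j \<le> k - a) then kap k a (q - j) else 0)"
    unfolding sum_if_eq_single by (intro sum.cong refl) auto
  also have "\<dots> = (\<Sum>a\<le>k. if a = p - i \<and> (i \<le> p \<and> j \<le> q \<and> q - j \<le> k - (p - i)) then kap k (p - i) (q - j) else 0)"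
    by (intro sum.cong refl) auto
  also have "\<dots> = EE i j k p q"
    unfolding sum_if_eq_single[where g="\<lambda>_. kap k (p - i) (q - j)"] EE_def by auto
  finally show ?thesis .
qed

lemma plane_coeff:
  fixes c :: "nat \<Rightarrow> nat \<Rightarrow> nat \<Rightarrow> real"
  assumes fin: "finite S" and bnd: "\<And>i j k. (i, j, k) \<in> S \<Longrightarrow> i + j + k < D"
    and H: "\<And>x y. (\<Sum>(i, j, k)\<in>S. c i j k * x ^ i * y ^ j * (1 - x - y) ^ k) = 1"
    and pq: "p < D" "q < D"
  shows "(\<Sum>(i, j, k)\<in>S. c i j k * EE i j k p q) = (if p = 0 \<and> q = 0 then 1 else 0)"
proof -
  define T where "T = (\<lambda>(i::nat, j::nat, k::nat). \<Sum>a\<le>k. \<Sum>b\<le>k - a.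
      monom (c i j k * kap k a b) ((i + a) + D * (j + b)))"
  define P where "P = (\<Sum>m\<in>S. T m) - monom 1 0"
  have "poly P t = 0" for t
  proof -
    have "poly (T (i, j, k)) t = c i j k * t ^ i * (t ^ D) ^ j * (1 - t - t ^ D) ^ k" for i j k
      unfolding T_def prod.case trinom poly_sum poly_monom sum_distrib_left
      by (intro sum.cong refl) (simp add: power_add power_mult[symmetric] algebra_simps)
    then have "poly (\<Sum>m\<in>S. T m) t = (\<Sum>(i, j, k)\<in>S. c i j k * t ^ i * (t ^ D) ^ j * (1 - t - t ^ D) ^ k)"
      unfolding poly_sum by (intro sum.cong refl) auto
    also have "\<dots> = 1" by (rule H)
    finally show ?thesis unfolding P_def by simp
  qed
  then have "P = 0" using poly_all_0_iff_0 by blast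
  then have "coeff P (p + D * q) = 0" by simp
  moreover have "coeff (T (i, j, k)) (p + D * q) = c i j k * EE i j k p q" if "(i, j, k) \<in> S" for i j k
  proof -
    have b: "i + k < D" "j + k < D" using bnd[OF that] by auto
    have "coeff (T (i, j, k)) (p + D * q) = (\<Sum>a\<le>k. \<Sum>b\<le>k - a.
        if (i + a) + D * (j + b) = p + D * q then c i j k * kap k a b else 0)"
      unfolding T_def prod.case coeff_sum coeff_monom by (intro sum.cong refl)
    also have "\<dots> = c i j k * (\<Sum>a\<le>k. \<Sum>b\<le>k - a.
        if (i + a) + D * (j + b) = p + D * q then kap k a b else 0)"
      unfolding sum_distrib_left by (intro sum.cong refl) auto
    also have "\<dots> = c i j k * EE i j k p q" using EE_sum[OF b pq] by simp
    finally show ?thesis .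
  qed
  moreover have "coeff (monom (1::real) 0) (p + D * q) = (if p = 0 \<and> q = 0 then 1 else 0)"
    using pq by auto
  ultimately have A: "(\<Sum>m\<in>S. coeff (T m) (p + D * q)) = (if p = 0 \<and> q = 0 then 1 else 0)"
    and B: "\<And>i j k. (i, j, k) \<in> S \<Longrightarrow> coeff (T (i, j, k)) (p + D * q) = c i j k * EE i j k p q"
    unfolding P_def coeff_diff coeff_sum by auto
  have "(\<Sum>m\<in>S. coeff (T m) (p + D * q)) = (\<Sum>(i, j, k)\<in>S. c i j k * EE i j k p q)"
    by (rule sum.cong) (auto simp: B)
  then show ?thesis using A by simp
qed


definition M11 :: "(nat \<times> nat \<times> nat) set" where
  "M11 = {(1, 1, 1), (0, 1, 3), (1, 3, 0), (3, 0, 1), (0, 3, 2), (2, 0, 3), (3, 2, 0), (0, 5, 1), (1, 0, 5), (2, 2, 2), (5, 1, 0), (0, 0, 7), (0, 7, 0), (1, 2, 4), (2, 4, 1), (4, 1, 2), (7, 0, 0), (0, 2, 6), (1, 4, 3), (2, 6, 0), (3, 1, 4), (4, 3, 1), (6, 0, 2), (0, 4, 5), (1, 6, 2), (2, 1, 6), (3, 3, 3), (4, 5, 0), (5, 0, 4), (6, 2, 1), (0, 6, 4), (1, 1, 8), (1, 8, 1), (2, 3, 5), (3, 5, 2), (4, 0, 6), (5, 2, 3), (6, 4, 0), (8, 1, 1), (0, 1, 10), (0, 8, 3), (1, 3, 7), (1, 10, 0), (2, 5, 4), (3, 0, 8), (3, 7, 1), (4, 2, 5), (5, 4, 2), (7,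 1, 3), (8, 3, 0), (10, 0, 1)}"

lemma M11_fin: "finite M11" by (simp add: M11_def)

lemma M11_bnd: "(i, j, k) \<in> M11 \<Longrightarrow> i + j + k < 12" by (auto simp: M11_def)

lemma sumM11: "(\<Sum>(i, j, k)\<in>M11. f i j k) = f 1 1 1 + f 0 1 3 + f 1 3 0 + f 3 0 1 + f 0 3 2 + f 2 0 3 + f 3 2 0 + f 0 5 1 + f 1 0 5 + f 2 2 2 + f 5 1 0 + f 0 0 7 + f 0 7 0 + f 1 2 4 + f 2 4 1 + f 4 1 2 + f 7 0 0 + f 0 2 6 + f 1 4 3 + f 2 6 0 + f 3 1 4 + f 4 3 1 + f 6 0 2 + f 0 4 5 + f 1 6 2 + f 2 1 6 + f 3 3 3 + f 4 5 0 + f 5 0 4 + f 6 2 1 + f 0 6 4 + f 1 1 8 + f 1 8 1 + f 2 3 5 + f 3 5 2 + f 4 0 6 + f 5 2 3 + f 6 4 0 + f 8 1 1 + f 0 1 10 + f 0 8 3 + f 1 3 7 + f 1 10 0 + f 2 5 4 + f 3 0 8 + f 3 7 1 + f 4 2 5 + f 5 4 2 + f 7 1 3 + f 8 3 0 + f 10 0 1"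
  by (simp add: M11_def add.assoc)

lemma M11_enum_list: "list_all (\<lambda>k. list_all (\<lambda>j. list_all (\<lambda>i.
   i + j + k \<le> 11 \<longrightarrow> (i + 2 * j + 4 * k) mod 7 = 0 \<longrightarrow> (i, j, k) \<noteq> (0, 0, 0) \<longrightarrow> (i, j, k) \<in> M11)
   [0..<12]) [0..<12]) [0..<12]"
  unfolding M11_def by code_simp

lemma M11_enum:
  assumes "i + j + k \<le> 11" "7 dvd (i + 2 * j + 4 * k)" "(i, j, k) \<noteq> (0, 0, 0)"
  shows "(i, j, k) \<in> M11"
proof -
  have "k \<in> set [0..<12]" "j \<in> set [0..<12]" "i \<in> set [0..<12]" using assms(1) by auto
  then show ?thesis using M11_enum_list assms unfolding list_all_iff by auto
qed

lemma binom_tab: "(2 choose 1 :: nat) = 2"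
  "(3 choose 1 :: nat) = 3"
  "(3 choose 2 :: nat) = 3"
  "(4 choose 1 :: nat) = 4"
  "(4 choose 2 :: nat) = 6"
  "(4 choose 3 :: nat) = 4"
  "(5 choose 1 :: nat) = 5"
  "(5 choose 2 :: nat) = 10"
  "(5 choose 3 :: nat) = 10"
  "(5 choose 4 :: nat) = 5"
  "(6 choose 1 :: nat) = 6"
  "(6 choose 2 :: nat) = 15"
  "(6 choose 3 :: nat) = 20"
  "(6 choose 4 :: nat) = 15"
  "(6 choose 5 :: nat) = 6"
  "(7 choose 1 :: nat) = 7"
  "(7 choose 2 :: nat) = 21"
  "(7 choose 3 :: nat) = 35"
  "(7 choose 4 :: nat) = 35"
  "(7 choose 5 :: nat) = 21"
  "(7 choose 6 :: nat) = 7"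
  "(8 choose 1 :: nat) = 8"
  "(8 choose 2 :: nat) = 28"
  "(8 choose 3 :: nat) = 56"
  "(8 choose 4 :: nat) = 70"
  "(8 choose 5 :: nat) = 56"
  "(8 choose 6 :: nat) = 28"
  "(8 choose 7 :: nat) = 8"
  "(9 choose 1 :: nat) = 9"
  "(9 choose 2 :: nat) = 36"
  "(9 choose 3 :: nat) = 84"
  "(9 choose 4 :: nat) = 126"
  "(9 choose 5 :: nat) = 126"
  "(9 choose 6 :: nat) = 84"
  "(9 choose 7 :: nat) = 36"
  "(9 choose 8 :: nat) = 9"
  "(10 choose 1 :: nat) = 10"
  "(10 choose 2 :: nat) = 45"
  "(10 choose 3 :: nat) = 120"
  "(10 choose 4 :: nat) = 210"
  "(10 choose 5 :: nat) = 252"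
  "(10 choose 6 :: nat) = 210"
  "(10 choose 7 :: nat) = 120"
  "(10 choose 8 :: nat) = 45"
  "(10 choose 9 :: nat) = 10"
  "(11 choose 1 :: nat) = 11"
  "(11 choose 2 :: nat) = 55"
  "(11 choose 3 :: nat) = 165"
  "(11 choose 4 :: nat) = 330"
  "(11 choose 5 :: nat) = 462"
  "(11 choose 6 :: nat) = 462"
  "(11 choose 7 :: nat) = 330"
  "(11 choose 8 :: nat) = 165"
  "(11 choose 9 :: nat) = 55"
  "(11 choose 10 :: nat) = 11"
  by (simp_all add: numeral_eq_Suc)

locale sp11 =
  fixes G :: poly3
  assumes Msub: "supp3 G \<subseteq> M11"
    and plane: "\<And>x y. (\<Sum>(i, j, k)\<in>M11. G i j k * x ^ i * y ^ j * (1 - x - y) ^ k) = 1"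
    and nn: "\<And>i j k. G i j k \<ge> 0"
begin

end



lemma special_sp11:
  fixes \<eta> :: complex
  assumes sp: "special \<eta> G" and h7: "\<eta> ^ 7 = 1" and h1: "\<eta> \<noteq> 1"
    and dl: "\<And>i j k. (i, j, k) \<in> supp3 G \<Longrightarrow> i + j + k \<le> 11"
  shows "sp11 G"
proof
  show sub: "supp3 G \<subseteq> M11"
  proof
    fix m assume m: "m \<in> supp3 G"
    obtain i j k where mm: "m = (i, j, k)" by (cases m) auto
    have m': "(i, j, k) \<in> supp3 G" using m mm by simp
    have nz: "(i, j, k) \<noteq> (0, 0, 0)"
    proof
      assume "(i, j, k) = (0, 0, 0)"
      then show False using zero_not_supp[OF sp] m' by simp
    qed
    show "m \<in> M11" unfolding mm
      by (rule M11_enum[OF dl[OF m'] inv7[OF sp h7 h1 m'] nz])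
  qed
  show "G i j k \<ge> 0" for i j k using sp by (simp add: special_def)
  fix x y :: real
  have "eval3 G x y (1 - x - y) = 1" using sp by (simp add: special_def)
  moreover have "eval3 G x y (1 - x - y) = (\<Sum>(i, j, k)\<in>M11. G i j k * x ^ i * y ^ j * (1 - x - y) ^ k)"
    unfolding eval3_def of_real_eq_id id_apply
  proof (rule sum.mono_neutral_left[OF M11_fin sub])
    show "\<forall>m\<in>M11 - supp3 G. (case m of (i, j, k) \<Rightarrow> G i j k * x ^ i * y ^ j * (1 - x - y) ^ k) = 0"
      by (auto simp: supp3_def)
  qed
  ultimately show "(\<Sum>(i, j, k)\<in>M11. G i j k * x ^ i * y ^ j * (1 - x - y) ^ k) = 1" by simp
qed


context sp11 begin
lemma pc: "p < 12 \<Longrightarrow> q < 12 \<Longrightarrow> (\<Sum>(i, j, k)\<in>M11. G i j k * EE i j k p q) = (if p = 0 \<and> q = 0 then 1 else 0)"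
  by (rule plane_coeff[OF M11_fin M11_bnd plane]) auto

lemma eq_0_0: "G 0 0 7 = 1"
  using pc[of 0 0] unfolding sumM11 by (simp add: EE_def kap_def binom_tab)

lemma eq_1_0: "(-7) * G 0 0 7 + G 1 0 5 = 0"
  using pc[of 1 0] unfolding sumM11 by (simp add: EE_def kap_def binom_tab)

lemma eq_2_0: "(21) * G 0 0 7 + (-5) * G 1 0 5 + G 2 0 3 = 0"
  using pc[of 2 0] unfolding sumM11 by (simp add: EE_def kap_def binom_tab)

lemma eq_11_0: "G 3 0 8 + - G 10 0 1 = 0"
  using pc[of 11 0] unfolding sumM11 by (simp add: EE_def kap_def binom_tab)

lemma eq_3_0: "(-35) * G 0 0 7 + (10) * G 1 0 5 + (-3) * G 2 0 3 + G 3 0 1 + G 3 0 8 = 0"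
  using pc[of 3 0] unfolding sumM11 by (simp add: EE_def kap_def binom_tab)

lemma eq_4_0: "(35) * G 0 0 7 + (-10) * G 1 0 5 + (3) * G 2 0 3 + - G 3 0 1 + (-8) * G 3 0 8 + G 4 0 6 = 0"
  using pc[of 4 0] unfolding sumM11 by (simp add: EE_def kap_def binom_tab)

lemma eq_5_0: "(-21) * G 0 0 7 + (5) * G 1 0 5 + - G 2 0 3 + (28) * G 3 0 8 + (-6) * G 4 0 6 + G 5 0 4 = 0"
  using pc[of 5 0] unfolding sumM11 by (simp add: EE_def kap_def binom_tab)

lemma eq_6_0: "(7) * G 0 0 7 + - G 1 0 5 + (-56) * G 3 0 8 + (15) * G 4 0 6 + (-4) * G 5 0 4 + G 6 0 2 = 0"
  using pc[of 6 0] unfolding sumM11 by (simp add: EE_def kap_def binom_tab)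

lemma eq_7_0: "- G 0 0 7 + (70) * G 3 0 8 + (-20) * G 4 0 6 + (6) * G 5 0 4 + (-2) * G 6 0 2 + G 7 0 0 = 0"
  using pc[of 7 0] unfolding sumM11 by (simp add: EE_def kap_def binom_tab)

lemma eq_10_1: "G 0 1 10 + (8) * G 3 0 8 + - G 7 1 3 + - G 10 0 1 = 0"
  using pc[of 10 1] unfolding sumM11 by (simp add: EE_def kap_def binom_tab)

lemma eq_0_1: "(-7) * G 0 0 7 + G 0 1 3 + G 0 1 10 = 0"
  using pc[of 0 1] unfolding sumM11 by (simp add: EE_def kap_def binom_tab)

lemma eq_0_2: "(21) * G 0 0 7 + (-3) * G 0 1 3 + (-10) * G 0 1 10 + G 0 2 6 = 0"
  using pc[of 0 2] unfolding sumM11 by (simp add: EE_def kap_def binom_tab)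

lemma eq_0_3: "(-35) * G 0 0 7 + (3) * G 0 1 3 + (45) * G 0 1 10 + (-6) * G 0 2 6 + G 0 3 2 = 0"
  using pc[of 0 3] unfolding sumM11 by (simp add: EE_def kap_def binom_tab)

lemma eq_0_4: "(35) * G 0 0 7 + - G 0 1 3 + (-120) * G 0 1 10 + (15) * G 0 2 6 + (-2) * G 0 3 2 + G 0 4 5 = 0"
  using pc[of 0 4] unfolding sumM11 by (simp add: EE_def kap_def binom_tab)

lemma eq_0_5: "(-21) * G 0 0 7 + (210) * G 0 1 10 + (-20) * G 0 2 6 + G 0 3 2 + (-5) * G 0 4 5 + G 0 5 1 = 0"
  using pc[of 0 5] unfolding sumM11 by (simp add: EE_def kap_def binom_tab)

lemma eq_0_6: "(7) * G 0 0 7 + (-252) * G 0 1 10 + (15) * G 0 2 6 + (10) * G 0 4 5 + - G 0 5 1 + G 0 6 4 = 0"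
  using pc[of 0 6] unfolding sumM11 by (simp add: EE_def kap_def binom_tab)

lemma eq_0_7: "- G 0 0 7 + (210) * G 0 1 10 + (-6) * G 0 2 6 + (-10) * G 0 4 5 + (-4) * G 0 6 4 + G 0 7 0 = 0"
  using pc[of 0 7] unfolding sumM11 by (simp add: EE_def kap_def binom_tab)

lemma eq_0_8: "(-120) * G 0 1 10 + G 0 2 6 + (5) * G 0 4 5 + (6) * G 0 6 4 + G 0 8 3 = 0"
  using pc[of 0 8] unfolding sumM11 by (simp add: EE_def kap_def binom_tab)

lemma eq_9_1: "(-10) * G 0 1 10 + G 1 1 8 + (-56) * G 3 0 8 + (6) * G 4 0 6 + (3) * G 7 1 3 + - G 8 1 1 = 0"
  using pc[of 9 1] unfolding sumM11 by (simp add: EE_def kap_def binom_tab)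

lemma eq_9_2: "(10) * G 0 1 10 + (28) * G 3 0 8 + - G 4 2 5 + (-3) * G 7 1 3 = 0"
  using pc[of 9 2] unfolding sumM11 by (simp add: EE_def kap_def binom_tab)

lemma eq_1_1: "(42) * G 0 0 7 + (-3) * G 0 1 3 + (-10) * G 0 1 10 + (-5) * G 1 0 5 + G 1 1 1 + G 1 1 8 = 0"
  using pc[of 1 1] unfolding sumM11 by (simp add: EE_def kap_def binom_tab)

lemma eq_1_2: "(-105) * G 0 0 7 + (6) * G 0 1 3 + (90) * G 0 1 10 + (-6) * G 0 2 6 + (10) * G 1 0 5 + - G 1 1 1 + (-8) * G 1 1 8 + G 1 2 4 = 0"
  using pc[of 1 2] unfolding sumM11 by (simp add: EE_def kap_def binom_tab)

lemma eq_2_1: "(-105) * G 0 0 7 + (3) * G 0 1 3 + (45) * G 0 1 10 + (20) * G 1 0 5 + - G 1 1 1 + (-8) * G 1 1 8 + (-3) * G 2 0 3 + G 2 1 6 = 0"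
  using pc[of 2 1] unfolding sumM11 by (simp add: EE_def kap_def binom_tab)

lemma eq_2_2: "(210) * G 0 0 7 + (-3) * G 0 1 3 + (-360) * G 0 1 10 + (15) * G 0 2 6 + (-30) * G 1 0 5 + (56) * G 1 1 8 + (-4) * G 1 2 4 + (3) * G 2 0 3 + (-6) * G 2 1 6 + G 2 2 2 = 0"
  using pc[of 2 2] unfolding sumM11 by (simp add: EE_def kap_def binom_tab)

lemma eq_3_1: "(140) * G 0 0 7 + - G 0 1 3 + (-120) * G 0 1 10 + (-30) * G 1 0 5 + (28) * G 1 1 8 + (6) * G 2 0 3 + (-6) * G 2 1 6 + - G 3 0 1 + (-8) * G 3 0 8 + G 3 1 4 = 0"
  using pc[of 3 1] unfolding sumM11 by (simp add: EE_def kap_def binom_tab)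

lemma eq_3_2: "(-210) * G 0 0 7 + (840) * G 0 1 10 + (-20) * G 0 2 6 + (30) * G 1 0 5 + (-168) * G 1 1 8 + (6) * G 1 2 4 + (-3) * G 2 0 3 + (30) * G 2 1 6 + (-2) * G 2 2 2 + (28) * G 3 0 8 + (-4) * G 3 1 4 + G 3 2 0 = 0"
  using pc[of 3 2] unfolding sumM11 by (simp add: EE_def kap_def binom_tab)

lemma eq_4_1: "(-105) * G 0 0 7 + (210) * G 0 1 10 + (20) * G 1 0 5 + (-56) * G 1 1 8 + (-3) * G 2 0 3 + (15) * G 2 1 6 + (56) * G 3 0 8 + (-4) * G 3 1 4 + (-6) * G 4 0 6 + G 4 1 2 = 0"
  using pc[of 4 1] unfolding sumM11 by (simp add: EE_def kap_def binom_tab)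

lemma eq_5_1: "(42) * G 0 0 7 + (-252) * G 0 1 10 + (-5) * G 1 0 5 + (70) * G 1 1 8 + (-20) * G 2 1 6 + (-168) * G 3 0 8 + (6) * G 3 1 4 + (30) * G 4 0 6 + (-2) * G 4 1 2 + (-4) * G 5 0 4 + G 5 1 0 = 0"
  using pc[of 5 1] unfolding sumM11 by (simp add: EE_def kap_def binom_tab)

lemma eq_5_2: "(-21) * G 0 0 7 + (1260) * G 0 1 10 + (-6) * G 0 2 6 + (-280) * G 1 1 8 + G 1 2 4 + (60) * G 2 1 6 + (420) * G 3 0 8 + (-12) * G 3 1 4 + (-60) * G 4 0 6 + (2) * G 4 1 2 + (-5) * G 4 2 5 + (6) * G 5 0 4 + G 5 2 3 = 0"
  using pc[of 5 2] unfolding sumM11 by (simp add: EE_def kap_def binom_tab)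

lemma eq_6_2: "(-840) * G 0 1 10 + G 0 2 6 + (168) * G 1 1 8 + (-30) * G 2 1 6 + (-560) * G 3 0 8 + (4) * G 3 1 4 + (90) * G 4 0 6 + (10) * G 4 2 5 + (-12) * G 5 0 4 + (-3) * G 5 2 3 + G 6 0 2 + G 6 2 1 = 0"
  using pc[of 6 2] unfolding sumM11 by (simp add: EE_def kap_def binom_tab)

lemma eq_8_3: "(45) * G 0 1 10 + - G 1 3 7 + (56) * G 3 0 8 + (-5) * G 4 2 5 + (-3) * G 7 1 3 + G 8 3 0 = 0"
  using pc[of 8 3] unfolding sumM11 by (simp add: EE_def kap_def binom_tab)

lemma eq_1_3: "(140) * G 0 0 7 + (-3) * G 0 1 3 + (-360) * G 0 1 10 + (30) * G 0 2 6 + (-2) * G 0 3 2 + (-10) * G 1 0 5 + (28) * G 1 1 8 + (-4) * G 1 2 4 + G 1 3 0 + G 1 3 7 = 0"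
  using pc[of 1 3] unfolding sumM11 by (simp add: EE_def kap_def binom_tab)

lemma eq_1_4: "(-105) * G 0 0 7 + (840) * G 0 1 10 + (-60) * G 0 2 6 + (2) * G 0 3 2 + (-5) * G 0 4 5 + (5) * G 1 0 5 + (-56) * G 1 1 8 + (6) * G 1 2 4 + (-7) * G 1 3 7 + G 1 4 3 = 0"
  using pc[of 1 4] unfolding sumM11 by (simp add: EE_def kap_def binom_tab)

lemma eq_2_3: "(-210) * G 0 0 7 + (1260) * G 0 1 10 + (-60) * G 0 2 6 + G 0 3 2 + (20) * G 1 0 5 + (-168) * G 1 1 8 + (12) * G 1 2 4 + (-7) * G 1 3 7 + - G 2 0 3 + (15) * G 2 1 6 + (-2) * G 2 2 2 + G 2 3 5 = 0"
  using pc[of 2 3] unfolding sumM11 by (simp add: EE_def kap_def binom_tab)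

lemma eq_2_4: "(105) * G 0 0 7 + (-2520) * G 0 1 10 + (90) * G 0 2 6 + (10) * G 0 4 5 + (-5) * G 1 0 5 + (280) * G 1 1 8 + (-12) * G 1 2 4 + (42) * G 1 3 7 + (-3) * G 1 4 3 + (-20) * G 2 1 6 + G 2 2 2 + (-5) * G 2 3 5 + G 2 4 1 = 0"
  using pc[of 2 4] unfolding sumM11 by (simp add: EE_def kap_def binom_tab)

lemma eq_3_3: "(140) * G 0 0 7 + (-2520) * G 0 1 10 + (60) * G 0 2 6 + (-10) * G 1 0 5 + (420) * G 1 1 8 + (-12) * G 1 2 4 + (21) * G 1 3 7 + (-60) * G 2 1 6 + (2) * G 2 2 2 + (-5) * G 2 3 5 + (-56) * G 3 0 8 + (6) * G 3 1 4 + G 3 3 3 = 0"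
  using pc[of 3 3] unfolding sumM11 by (simp add: EE_def kap_def binom_tab)

lemma eq_1_6: "(-7) * G 0 0 7 + (1260) * G 0 1 10 + (-30) * G 0 2 6 + (-30) * G 0 4 5 + (-4) * G 0 6 4 + (-56) * G 1 1 8 + G 1 2 4 + (-35) * G 1 3 7 + (3) * G 1 4 3 + G 1 6 2 = 0"
  using pc[of 1 6] unfolding sumM11 by (simp add: EE_def kap_def binom_tab)

lemma eq_2_5: "(-21) * G 0 0 7 + (3150) * G 0 1 10 + (-60) * G 0 2 6 + (-30) * G 0 4 5 + (-280) * G 1 1 8 + (4) * G 1 2 4 + (-105) * G 1 3 7 + (6) * G 1 4 3 + (15) * G 2 1 6 + (10) * G 2 3 5 + - G 2 4 1 + G 2 5 4 = 0"
  using pc[of 2 5] unfolding sumM11 by (simp add: EE_def kap_def binom_tab)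

lemma eq_4_3: "(-35) * G 0 0 7 + (3150) * G 0 1 10 + (-30) * G 0 2 6 + (-560) * G 1 1 8 + (4) * G 1 2 4 + (-35) * G 1 3 7 + (90) * G 2 1 6 + (10) * G 2 3 5 + (280) * G 3 0 8 + (-12) * G 3 1 4 + (-3) * G 3 3 3 + (-20) * G 4 0 6 + G 4 1 2 + (-5) * G 4 2 5 + G 4 3 1 = 0"
  using pc[of 4 3] unfolding sumM11 by (simp add: EE_def kap_def binom_tab)

lemma eq_2_6: "(-2520) * G 0 1 10 + (15) * G 0 2 6 + (30) * G 0 4 5 + (6) * G 0 6 4 + (168) * G 1 1 8 + (140) * G 1 3 7 + (-3) * G 1 4 3 + (-2) * G 1 6 2 + (-6) * G 2 1 6 + (-10) * G 2 3 5 + (-4) * G 2 5 4 + G 2 6 0 = 0"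
  using pc[of 2 6] unfolding sumM11 by (simp add: EE_def kap_def binom_tab)

lemma eq_3_5: "(-4200) * G 0 1 10 + (20) * G 0 2 6 + (20) * G 0 4 5 + (420) * G 1 1 8 + (210) * G 1 3 7 + (-3) * G 1 4 3 + (-30) * G 2 1 6 + (-30) * G 2 3 5 + (-4) * G 2 5 4 + (-56) * G 3 0 8 + G 3 1 4 + (3) * G 3 3 3 + G 3 5 2 = 0"
  using pc[of 3 5] unfolding sumM11 by (simp add: EE_def kap_def binom_tab)

lemma eq_1_8: "(360) * G 0 1 10 + (-5) * G 0 4 5 + (-12) * G 0 6 4 + (-3) * G 0 8 3 + (-8) * G 1 1 8 + (-21) * G 1 3 7 + G 1 6 2 + G 1 8 1 = 0"
  using pc[of 1 8] unfolding sumM11 by (simp add: EE_def kap_def binom_tab)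

lemma eq_4_5: "(3150) * G 0 1 10 + (-5) * G 0 4 5 + (-280) * G 1 1 8 + (-210) * G 1 3 7 + (15) * G 2 1 6 + (30) * G 2 3 5 + (6) * G 2 5 4 + (168) * G 3 0 8 + (-3) * G 3 3 3 + (-2) * G 3 5 2 + (-6) * G 4 0 6 + (-10) * G 4 2 5 + G 4 5 0 = 0"
  using pc[of 4 5] unfolding sumM11 by (simp add: EE_def kap_def binom_tab)

lemma eq_5_4: "(2520) * G 0 1 10 + - G 0 4 5 + (-280) * G 1 1 8 + (-105) * G 1 3 7 + (20) * G 2 1 6 + (20) * G 2 3 5 + (420) * G 3 0 8 + (-3) * G 3 3 3 + (-30) * G 4 0 6 + (-30) * G 4 2 5 + G 5 0 4 + (3) * G 5 2 3 + G 5 4 2 = 0"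
  using pc[of 5 4] unfolding sumM11 by (simp add: EE_def kap_def binom_tab)

lemma eq_3_7: "(-840) * G 0 1 10 + (4) * G 0 6 4 + (28) * G 1 1 8 + (105) * G 1 3 7 + (-5) * G 2 3 5 + (-12) * G 2 5 4 + (-8) * G 3 0 8 + G 3 5 2 + G 3 7 1 = 0"
  using pc[of 3 7] unfolding sumM11 by (simp add: EE_def kap_def binom_tab)

lemma eq_6_4: "(-840) * G 0 1 10 + (56) * G 1 1 8 + (42) * G 1 3 7 + (-5) * G 2 3 5 + (-280) * G 3 0 8 + (15) * G 4 0 6 + (30) * G 4 2 5 + (-3) * G 5 2 3 + (-2) * G 5 4 2 + G 6 4 0 = 0"
  using pc[of 6 4] unfolding sumM11 by (simp add: EE_def kap_def binom_tab)

lemma eq_1_10: "(10) * G 0 1 10 + (-3) * G 0 8 3 + - G 1 3 7 + G 1 10 0 = 0"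
  using pc[of 1 10] unfolding sumM11 by (simp add: EE_def kap_def binom_tab)

lemma v_0_0_7: "G 0 0 7 = 1"
  using eq_0_0  by linarith

lemma v_1_0_5: "G 1 0 5 = 7"
  using eq_1_0 v_0_0_7 by linarith

lemma v_2_0_3: "G 2 0 3 = 14"
  using eq_2_0 v_1_0_5 v_0_0_7 by linarith

lemma v_3_0_8: "G 3 0 8 = 0 + 1 * G 10 0 1"
  using eq_11_0  by linarith

lemma v_3_0_1: "G 3 0 1 = 7 - 1 * G 10 0 1"
  using eq_3_0 v_2_0_3 v_1_0_5 v_0_0_7 v_3_0_8 by linarith

lemma v_4_0_6: "G 4 0 6 = 0 + 7 * G 10 0 1"
  using eq_4_0 v_3_0_1 v_2_0_3 v_1_0_5 v_0_0_7 v_3_0_8 by linarith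

lemma v_5_0_4: "G 5 0 4 = 0 + 14 * G 10 0 1"
  using eq_5_0 v_2_0_3 v_1_0_5 v_0_0_7 v_4_0_6 v_3_0_8 by linarith

lemma v_6_0_2: "G 6 0 2 = 0 + 7 * G 10 0 1"
  using eq_6_0 v_1_0_5 v_0_0_7 v_5_0_4 v_4_0_6 v_3_0_8 by linarith

lemma v_7_0_0: "G 7 0 0 = 1"
  using eq_7_0 v_0_0_7 v_6_0_2 v_5_0_4 v_4_0_6 v_3_0_8 by linarith

lemma v_0_1_10: "G 0 1 10 = 0 + 1 * G 7 1 3 - 7 * G 10 0 1"
  using eq_10_1 v_3_0_8 by linarith

lemma v_0_1_3: "G 0 1 3 = 7 - 1 * G 7 1 3 + 7 * G 10 0 1"
  using eq_0_1 v_0_0_7 v_0_1_10 by linarith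

lemma v_0_2_6: "G 0 2 6 = 0 + 7 * G 7 1 3 - 49 * G 10 0 1"
  using eq_0_2 v_0_1_3 v_0_0_7 v_0_1_10 by linarith

lemma v_0_3_2: "G 0 3 2 = 14"
  using eq_0_3 v_0_1_3 v_0_0_7 v_0_2_6 v_0_1_10 by linarith

lemma v_0_4_5: "G 0 4 5 = 0 + 14 * G 7 1 3 - 98 * G 10 0 1"
  using eq_0_4 v_0_1_3 v_0_3_2 v_0_0_7 v_0_2_6 v_0_1_10 by linarith

lemma v_0_5_1: "G 0 5 1 = 7"
  using eq_0_5 v_0_3_2 v_0_0_7 v_0_2_6 v_0_4_5 v_0_1_10 by linarith

lemma v_0_6_4: "G 0 6 4 = 0 + 7 * G 7 1 3 - 49 * G 10 0 1"
  using eq_0_6 v_0_5_1 v_0_0_7 v_0_2_6 v_0_4_5 v_0_1_10 by linarith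

lemma v_0_7_0: "G 0 7 0 = 1"
  using eq_0_7 v_0_0_7 v_0_2_6 v_0_4_5 v_0_6_4 v_0_1_10 by linarith

lemma v_0_8_3: "G 0 8 3 = 0 + 1 * G 7 1 3 - 7 * G 10 0 1"
  using eq_0_8 v_0_2_6 v_0_4_5 v_0_6_4 v_0_1_10 by linarith

lemma v_1_1_8: "G 1 1 8 = 0 + 1 * G 8 1 1 + 7 * G 7 1 3 - 56 * G 10 0 1"
  using eq_9_1 v_4_0_6 v_0_1_10 v_3_0_8 by linarith

lemma v_4_2_5: "G 4 2 5 = 0 + 7 * G 7 1 3 - 42 * G 10 0 1"
  using eq_9_2 v_0_1_10 v_3_0_8 by linarith

lemma v_1_1_1: "G 1 1 1 = 14 - 1 * G 8 1 1 + 7 * G 10 0 1"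
  using eq_1_1 v_0_1_3 v_1_0_5 v_0_0_7 v_1_1_8 v_0_1_10 by linarith

lemma v_1_2_4: "G 1 2 4 = 7 + 7 * G 8 1 1 + 14 * G 7 1 3 - 147 * G 10 0 1"
  using eq_1_2 v_1_1_1 v_0_1_3 v_1_0_5 v_0_0_7 v_0_2_6 v_1_1_8 v_0_1_10 by linarith

lemma v_2_1_6: "G 2 1 6 = 0 + 7 * G 8 1 1 + 14 * G 7 1 3 - 147 * G 10 0 1"
  using eq_2_1 v_1_1_1 v_0_1_3 v_2_0_3 v_1_0_5 v_0_0_7 v_1_1_8 v_0_1_10 by linarith

lemma v_2_2_2: "G 2 2 2 = 7 + 14 * G 8 1 1 - 98 * G 10 0 1"
  using eq_2_2 v_0_1_3 v_2_0_3 v_1_0_5 v_0_0_7 v_1_2_4 v_0_2_6 v_2_1_6 v_1_1_8 v_0_1_10 by linarith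

lemma v_3_1_4: "G 3 1 4 = 0 + 14 * G 8 1 1 + 7 * G 7 1 3 - 140 * G 10 0 1"
  using eq_3_1 v_0_1_3 v_3_0_1 v_2_0_3 v_1_0_5 v_0_0_7 v_2_1_6 v_1_1_8 v_0_1_10 v_3_0_8 by linarith

lemma v_3_2_0: "G 3 2 0 = 14"
  using eq_3_2 v_2_0_3 v_1_0_5 v_2_2_2 v_0_0_7 v_1_2_4 v_0_2_6 v_3_1_4 v_2_1_6 v_1_1_8 v_0_1_10 v_3_0_8 by linarith

lemma v_4_1_2: "G 4 1 2 = 7 + 7 * G 8 1 1 - 35 * G 10 0 1"
  using eq_4_1 v_2_0_3 v_1_0_5 v_0_0_7 v_3_1_4 v_2_1_6 v_1_1_8 v_4_0_6 v_0_1_10 v_3_0_8 by linarith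

lemma v_5_1_0: "G 5 1 0 = 7"
  using eq_5_1 v_1_0_5 v_0_0_7 v_4_1_2 v_3_1_4 v_2_1_6 v_5_0_4 v_1_1_8 v_4_0_6 v_0_1_10 v_3_0_8 by linarith

lemma v_5_2_3: "G 5 2 3 = 0 + 7 * G 8 1 1 + 7 * G 7 1 3 - 91 * G 10 0 1"
  using eq_5_2 v_0_0_7 v_1_2_4 v_4_1_2 v_0_2_6 v_3_1_4 v_2_1_6 v_5_0_4 v_1_1_8 v_4_0_6 v_0_1_10 v_3_0_8 v_4_2_5 by linarith

lemma v_6_2_1: "G 6 2 1 = 0 + 7 * G 8 1 1 - 35 * G 10 0 1"
  using eq_6_2 v_0_2_6 v_3_1_4 v_6_0_2 v_2_1_6 v_5_0_4 v_1_1_8 v_4_0_6 v_5_2_3 v_0_1_10 v_3_0_8 v_4_2_5 by linarith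

lemma v_1_3_7: "G 1 3 7 = 0 + 7 * G 7 1 3 + 1 * G 8 3 0 - 49 * G 10 0 1"
  using eq_8_3 v_0_1_10 v_3_0_8 v_4_2_5 by linarith

lemma v_1_3_0: "G 1 3 0 = 7 - 1 * G 8 3 0"
  using eq_1_3 v_0_1_3 v_0_3_2 v_1_0_5 v_0_0_7 v_1_2_4 v_0_2_6 v_1_1_8 v_0_1_10 v_1_3_7 by linarith

lemma v_1_4_3: "G 1 4 3 = 0 + 14 * G 8 1 1 + 7 * G 7 1 3 + 7 * G 8 3 0 - 147 * G 10 0 1"
  using eq_1_4 v_0_3_2 v_1_0_5 v_0_0_7 v_1_2_4 v_0_2_6 v_0_4_5 v_1_1_8 v_0_1_10 v_1_3_7 by linarith

lemma v_2_3_5: "G 2 3 5 = 0 + 7 * G 8 1 1 + 7 * G 7 1 3 + 7 * G 8 3 0 - 98 * G 10 0 1"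
  using eq_2_3 v_0_3_2 v_2_0_3 v_1_0_5 v_2_2_2 v_0_0_7 v_1_2_4 v_0_2_6 v_2_1_6 v_1_1_8 v_0_1_10 v_1_3_7 by linarith

lemma v_2_4_1: "G 2 4 1 = 7 + 7 * G 8 1 1 + 14 * G 8 3 0 - 49 * G 10 0 1"
  using eq_2_4 v_1_0_5 v_2_2_2 v_0_0_7 v_1_2_4 v_0_2_6 v_1_4_3 v_0_4_5 v_2_1_6 v_1_1_8 v_2_3_5 v_0_1_10 v_1_3_7 by linarith

lemma v_3_3_3: "G 3 3 3 = 0 + 7 * G 8 1 1 + 14 * G 7 1 3 + 14 * G 8 3 0 - 133 * G 10 0 1"
  using eq_3_3 v_1_0_5 v_2_2_2 v_0_0_7 v_1_2_4 v_0_2_6 v_3_1_4 v_2_1_6 v_1_1_8 v_2_3_5 v_0_1_10 v_1_3_7 v_3_0_8 by linarith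

lemma v_1_6_2: "G 1 6 2 = 0 + 7 * G 8 1 1 + 14 * G 8 3 0 - 49 * G 10 0 1"
  using eq_1_6 v_0_0_7 v_1_2_4 v_0_2_6 v_1_4_3 v_0_4_5 v_0_6_4 v_1_1_8 v_0_1_10 v_1_3_7 by linarith

lemma v_2_5_4: "G 2 5 4 = 0 + 7 * G 7 1 3 + 7 * G 8 3 0 - 49 * G 10 0 1"
  using eq_2_5 v_0_0_7 v_1_2_4 v_2_4_1 v_0_2_6 v_1_4_3 v_0_4_5 v_2_1_6 v_1_1_8 v_2_3_5 v_0_1_10 v_1_3_7 by linarith

lemma v_4_3_1: "G 4 3 1 = 0 + 14 * G 8 1 1 + 7 * G 8 3 0 - 91 * G 10 0 1"
  using eq_4_3 v_0_0_7 v_1_2_4 v_4_1_2 v_0_2_6 v_3_1_4 v_2_1_6 v_3_3_3 v_1_1_8 v_2_3_5 v_4_0_6 v_0_1_10 v_1_3_7 v_3_0_8 v_4_2_5 by linarith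

lemma v_2_6_0: "G 2 6 0 = 0 + 7 * G 8 3 0"
  using eq_2_6 v_0_2_6 v_1_4_3 v_0_4_5 v_1_6_2 v_2_1_6 v_0_6_4 v_1_1_8 v_2_3_5 v_0_1_10 v_1_3_7 v_2_5_4 by linarith

lemma v_3_5_2: "G 3 5 2 = 0 + 7 * G 8 1 1 + 7 * G 8 3 0 - 42 * G 10 0 1"
  using eq_3_5 v_0_2_6 v_1_4_3 v_3_1_4 v_0_4_5 v_2_1_6 v_3_3_3 v_1_1_8 v_2_3_5 v_0_1_10 v_1_3_7 v_2_5_4 v_3_0_8 by linarith

lemma v_1_8_1: "G 1 8 1 = 0 + 1 * G 8 1 1 + 7 * G 8 3 0 - 7 * G 10 0 1"
  using eq_1_8 v_0_4_5 v_1_6_2 v_0_6_4 v_1_1_8 v_0_1_10 v_0_8_3 v_1_3_7 by linarith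

lemma v_4_5_0: "G 4 5 0 = 0 + 14 * G 8 3 0"
  using eq_4_5 v_0_4_5 v_2_1_6 v_3_3_3 v_1_1_8 v_2_3_5 v_3_5_2 v_4_0_6 v_0_1_10 v_1_3_7 v_2_5_4 v_3_0_8 v_4_2_5 by linarith

lemma v_5_4_2: "G 5 4 2 = 0 + 7 * G 8 3 0 + 7 * G 10 0 1"
  using eq_5_4 v_0_4_5 v_2_1_6 v_3_3_3 v_5_0_4 v_1_1_8 v_2_3_5 v_4_0_6 v_5_2_3 v_0_1_10 v_1_3_7 v_3_0_8 v_4_2_5 by linarith

lemma v_3_7_1: "G 3 7 1 = 0 + 7 * G 8 3 0 + 1 * G 10 0 1"
  using eq_3_7 v_0_6_4 v_1_1_8 v_2_3_5 v_3_5_2 v_0_1_10 v_1_3_7 v_2_5_4 v_3_0_8 by linarith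

lemma v_6_4_0: "G 6 4 0 = 0 + 7 * G 8 3 0"
  using eq_6_4 v_1_1_8 v_2_3_5 v_4_0_6 v_5_2_3 v_0_1_10 v_1_3_7 v_3_0_8 v_4_2_5 v_5_4_2 by linarith

lemma v_1_10_0: "G 1 10 0 = 0 + 1 * G 8 3 0"
  using eq_1_10 v_0_1_10 v_0_8_3 v_1_3_7 by linarith

lemmas vals = v_0_0_7 v_1_0_5 v_2_0_3 v_3_0_8 v_3_0_1 v_4_0_6 v_5_0_4 v_6_0_2 v_7_0_0 v_0_1_10 v_0_1_3 v_0_2_6 v_0_3_2 v_0_4_5 v_0_5_1 v_0_6_4 v_0_7_0 v_0_8_3 v_1_1_8 v_4_2_5 v_1_1_1 v_1_2_4 v_2_1_6 v_2_2_2 v_3_1_4 v_3_2_0 v_4_1_2 v_5_1_0 v_5_2_3 v_6_2_1 v_1_3_7 v_1_3_0 v_1_4_3 v_2_3_5 v_2_4_1 v_3_3_3 v_1_6_2 v_2_5_4 v_4_3_1 v_2_6_0 v_3_5_2 v_1_8_1 v_4_5_0 v_5_4_2 v_3_7_1 v_6_4_0 v_1_10_0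


end


context sp11 begin
lemma fin: "finite (supp3 G)" using Msub M11_fin by (rule finite_subset)

lemma zero_of_deg: "(\<And>i j k. (i, j, k) \<in> supp3 G \<Longrightarrow> i + j + k \<le> d) \<Longrightarrow> d < i + j + k \<Longrightarrow> G i j k = 0"
  by (force simp: supp3_def)

lemma card_M11: "card (supp3 G) = card (M11 \<inter> supp3 G)"
  using Msub by (simp add: Int_absorb1)


end

context sp11 begin
lemma deg7:
  assumes dl: "\<And>i j k. (i, j, k) \<in> supp3 G \<Longrightarrow> i + j + k \<le> 7"
  shows "card (supp3 G) = 17"
proof -

  have za: "G 8 1 1 = 0" using dl[of 8 1 1] by (auto simp: supp3_def)
  have zb: "G 7 1 3 = 0" using dl[of 7 1 3] by (auto simp: supp3_def)
  have ze: "G 8 3 0 = 0" using dl[of 8 3 0] by (auto simp: supp3_def)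
  have zf: "G 10 0 1 = 0" using dl[of 10 0 1] by (auto simp: supp3_def)

  have n_1_1_1: "G 1 1 1 \<noteq> 0" using v_1_1_1 za zb ze zf by simp

  have n_0_1_3: "G 0 1 3 \<noteq> 0" using v_0_1_3 za zb ze zf by simp

  have n_1_3_0: "G 1 3 0 \<noteq> 0" using v_1_3_0 za zb ze zf by simp

  have n_3_0_1: "G 3 0 1 \<noteq> 0" using v_3_0_1 za zb ze zf by simp

  have n_0_3_2: "G 0 3 2 \<noteq> 0" using v_0_3_2 za zb ze zf by simp

  have n_2_0_3: "G 2 0 3 \<noteq> 0" using v_2_0_3 za zb ze zf by simp

  have n_3_2_0: "G 3 2 0 \<noteq> 0" using v_3_2_0 za zb ze zf by simp

  have n_0_5_1: "G 0 5 1 \<noteq> 0" using v_0_5_1 za zb ze zf by simp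

  have n_1_0_5: "G 1 0 5 \<noteq> 0" using v_1_0_5 za zb ze zf by simp

  have n_2_2_2: "G 2 2 2 \<noteq> 0" using v_2_2_2 za zb ze zf by simp

  have n_5_1_0: "G 5 1 0 \<noteq> 0" using v_5_1_0 za zb ze zf by simp

  have n_0_0_7: "G 0 0 7 \<noteq> 0" using v_0_0_7 za zb ze zf by simp

  have n_0_7_0: "G 0 7 0 \<noteq> 0" using v_0_7_0 za zb ze zf by simp

  have n_1_2_4: "G 1 2 4 \<noteq> 0" using v_1_2_4 za zb ze zf by simp

  have n_2_4_1: "G 2 4 1 \<noteq> 0" using v_2_4_1 za zb ze zf by simp

  have n_4_1_2: "G 4 1 2 \<noteq> 0" using v_4_1_2 za zb ze zf by simp

  have n_7_0_0: "G 7 0 0 \<noteq> 0" using v_7_0_0 za zb ze zf by simp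

  have z_0_2_6: "G 0 2 6 = 0" using v_0_2_6 za zb ze zf by simp

  have z_1_4_3: "G 1 4 3 = 0" using v_1_4_3 za zb ze zf by simp

  have z_2_6_0: "G 2 6 0 = 0" using v_2_6_0 za zb ze zf by simp

  have z_3_1_4: "G 3 1 4 = 0" using v_3_1_4 za zb ze zf by simp

  have z_4_3_1: "G 4 3 1 = 0" using v_4_3_1 za zb ze zf by simp

  have z_6_0_2: "G 6 0 2 = 0" using v_6_0_2 za zb ze zf by simp

  have z_0_4_5: "G 0 4 5 = 0" using v_0_4_5 za zb ze zf by simp

  have z_1_6_2: "G 1 6 2 = 0" using v_1_6_2 za zb ze zf by simp

  have z_2_1_6: "G 2 1 6 = 0" using v_2_1_6 za zb ze zf by simp

  have z_3_3_3: "G 3 3 3 = 0" using v_3_3_3 za zb ze zf by simp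

  have z_4_5_0: "G 4 5 0 = 0" using v_4_5_0 za zb ze zf by simp

  have z_5_0_4: "G 5 0 4 = 0" using v_5_0_4 za zb ze zf by simp

  have z_6_2_1: "G 6 2 1 = 0" using v_6_2_1 za zb ze zf by simp

  have z_0_6_4: "G 0 6 4 = 0" using v_0_6_4 za zb ze zf by simp

  have z_1_1_8: "G 1 1 8 = 0" using v_1_1_8 za zb ze zf by simp

  have z_1_8_1: "G 1 8 1 = 0" using v_1_8_1 za zb ze zf by simp

  have z_2_3_5: "G 2 3 5 = 0" using v_2_3_5 za zb ze zf by simp

  have z_3_5_2: "G 3 5 2 = 0" using v_3_5_2 za zb ze zf by simp

  have z_4_0_6: "G 4 0 6 = 0" using v_4_0_6 za zb ze zf by simp

  have z_5_2_3: "G 5 2 3 = 0" using v_5_2_3 za zb ze zf by simp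

  have z_6_4_0: "G 6 4 0 = 0" using v_6_4_0 za zb ze zf by simp

  have z_0_1_10: "G 0 1 10 = 0" using v_0_1_10 za zb ze zf by simp

  have z_0_8_3: "G 0 8 3 = 0" using v_0_8_3 za zb ze zf by simp

  have z_1_3_7: "G 1 3 7 = 0" using v_1_3_7 za zb ze zf by simp

  have z_1_10_0: "G 1 10 0 = 0" using v_1_10_0 za zb ze zf by simp

  have z_2_5_4: "G 2 5 4 = 0" using v_2_5_4 za zb ze zf by simp

  have z_3_0_8: "G 3 0 8 = 0" using v_3_0_8 za zb ze zf by simp

  have z_3_7_1: "G 3 7 1 = 0" using v_3_7_1 za zb ze zf by simp

  have z_4_2_5: "G 4 2 5 = 0" using v_4_2_5 za zb ze zf by simp

  have z_5_4_2: "G 5 4 2 = 0" using v_5_4_2 za zb ze zf by simp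

  have "card (M11 \<inter> supp3 G) = 17" unfolding M11_def supp3_def
    by (simp add: za zb ze zf n_1_1_1 n_0_1_3 n_1_3_0 n_3_0_1 n_0_3_2 n_2_0_3 n_3_2_0 n_0_5_1 n_1_0_5 n_2_2_2 n_5_1_0 n_0_0_7 n_0_7_0 n_1_2_4 n_2_4_1 n_4_1_2 n_7_0_0 z_0_2_6 z_1_4_3 z_2_6_0 z_3_1_4 z_4_3_1 z_6_0_2 z_0_4_5 z_1_6_2 z_2_1_6 z_3_3_3 z_4_5_0 z_5_0_4 z_6_2_1 z_0_6_4 z_1_1_8 z_1_8_1 z_2_3_5 z_3_5_2 z_4_0_6 z_5_2_3 z_6_4_0 z_0_1_10 z_0_8_3 z_1_3_7 z_1_10_0 z_2_5_4 z_3_0_8 z_3_7_1 z_4_2_5 z_5_4_2 del: One_nat_def)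

  then show ?thesis using card_M11 by simp
qed


end

context sp11 begin
lemma deg89:
  assumes dl: "\<And>i j k. (i, j, k) \<in> supp3 G \<Longrightarrow> i + j + k \<le> 9"
    and m: "(i, j, k) \<in> supp3 G" and d: "8 \<le> i + j + k"
  shows False
proof -

  have za: "G 8 1 1 = 0" using dl[of 8 1 1] by (auto simp: supp3_def)
  have zb: "G 7 1 3 = 0" using dl[of 7 1 3] by (auto simp: supp3_def)
  have ze: "G 8 3 0 = 0" using dl[of 8 3 0] by (auto simp: supp3_def)
  have zf: "G 10 0 1 = 0" using dl[of 10 0 1] by (auto simp: supp3_def)

  have mem: "(i, j, k) \<in> M11" using m Msub by blast
  have nz: "G i j k \<noteq> 0" using m by (simp add: supp3_def)
  have all0: "\<forall>(i, j, k)\<in>M11. G i j k = 0 \<or> i + j + k < 8"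
    unfolding M11_def using za zb ze zf by (simp add: vals del: One_nat_def)
  show False using bspec[OF all0 mem] nz d by simp
qed


end

context sp11 begin
lemma deg10:
  assumes dl: "\<And>i j k. (i, j, k) \<in> supp3 G \<Longrightarrow> i + j + k \<le> 10"
    and m: "(i, j, k) \<in> supp3 G" and d: "i + j + k = 10"
  shows "card (supp3 G) = 29 \<or> card (supp3 G) = 30"
proof -

  have zb: "G 7 1 3 = 0" using dl[of 7 1 3] by (auto simp: supp3_def)
  have ze: "G 8 3 0 = 0" using dl[of 8 3 0] by (auto simp: supp3_def)
  have zf: "G 10 0 1 = 0" using dl[of 10 0 1] by (auto simp: supp3_def)

  have mem: "(i, j, k) \<in> M11" using m Msub by blast
  have nz: "G i j k \<noteq> 0" using m by (simp add: supp3_def)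
  have an0: "G 8 1 1 \<noteq> 0"
  proof
    assume za: "G 8 1 1 = 0"
    have all0: "\<forall>(i, j, k)\<in>M11. G i j k = 0 \<or> i + j + k \<noteq> 10"
      unfolding M11_def using za zb ze zf by (simp add: vals del: One_nat_def)
    show False using bspec[OF all0 mem] nz d by simp
  qed
  have apos: "0 < G 8 1 1" using an0 nn[of 8 1 1] by simp

  have c29: "G 8 1 1 = 14 \<Longrightarrow> card (M11 \<inter> supp3 G) = 29"
  proof -
    assume a14: "G 8 1 1 = 14"

    have z_1_1_1: "G 1 1 1 = 0" using v_1_1_1 a14 zf by simp

    have n_0_1_3: "G 0 1 3 \<noteq> 0"
    proof
      assume "G 0 1 3 = 0"
      then show False using v_0_1_3 apos zb ze zf by linarith
    qed

    have n_1_3_0: "G 1 3 0 \<noteq> 0"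
    proof
      assume "G 1 3 0 = 0"
      then show False using v_1_3_0 apos zb ze zf by linarith
    qed

    have n_3_0_1: "G 3 0 1 \<noteq> 0"
    proof
      assume "G 3 0 1 = 0"
      then show False using v_3_0_1 apos zb ze zf by linarith
    qed

    have n_0_3_2: "G 0 3 2 \<noteq> 0"
    proof
      assume "G 0 3 2 = 0"
      then show False using v_0_3_2 apos zb ze zf by linarith
    qed

    have n_2_0_3: "G 2 0 3 \<noteq> 0"
    proof
      assume "G 2 0 3 = 0"
      then show False using v_2_0_3 apos zb ze zf by linarith
    qed

    have n_3_2_0: "G 3 2 0 \<noteq> 0"
    proof
      assume "G 3 2 0 = 0"
      then show False using v_3_2_0 apos zb ze zf by linarith
    qed

    have n_0_5_1: "G 0 5 1 \<noteq> 0"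
    proof
      assume "G 0 5 1 = 0"
      then show False using v_0_5_1 apos zb ze zf by linarith
    qed

    have n_1_0_5: "G 1 0 5 \<noteq> 0"
    proof
      assume "G 1 0 5 = 0"
      then show False using v_1_0_5 apos zb ze zf by linarith
    qed

    have n_2_2_2: "G 2 2 2 \<noteq> 0"
    proof
      assume "G 2 2 2 = 0"
      then show False using v_2_2_2 apos zb ze zf by linarith
    qed

    have n_5_1_0: "G 5 1 0 \<noteq> 0"
    proof
      assume "G 5 1 0 = 0"
      then show False using v_5_1_0 apos zb ze zf by linarith
    qed

    have n_0_0_7: "G 0 0 7 \<noteq> 0"
    proof
      assume "G 0 0 7 = 0"
      then show False using v_0_0_7 apos zb ze zf by linarith
    qed

    have n_0_7_0: "G 0 7 0 \<noteq> 0"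
    proof
      assume "G 0 7 0 = 0"
      then show False using v_0_7_0 apos zb ze zf by linarith
    qed

    have n_1_2_4: "G 1 2 4 \<noteq> 0"
    proof
      assume "G 1 2 4 = 0"
      then show False using v_1_2_4 apos zb ze zf by linarith
    qed

    have n_2_4_1: "G 2 4 1 \<noteq> 0"
    proof
      assume "G 2 4 1 = 0"
      then show False using v_2_4_1 apos zb ze zf by linarith
    qed

    have n_4_1_2: "G 4 1 2 \<noteq> 0"
    proof
      assume "G 4 1 2 = 0"
      then show False using v_4_1_2 apos zb ze zf by linarith
    qed

    have n_7_0_0: "G 7 0 0 \<noteq> 0"
    proof
      assume "G 7 0 0 = 0"
      then show False using v_7_0_0 apos zb ze zf by linarith
    qed

    have z_0_2_6: "G 0 2 6 = 0" using v_0_2_6 zb ze zf by simp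

    have n_1_4_3: "G 1 4 3 \<noteq> 0"
    proof
      assume "G 1 4 3 = 0"
      then show False using v_1_4_3 apos zb ze zf by linarith
    qed

    have z_2_6_0: "G 2 6 0 = 0" using v_2_6_0 zb ze zf by simp

    have n_3_1_4: "G 3 1 4 \<noteq> 0"
    proof
      assume "G 3 1 4 = 0"
      then show False using v_3_1_4 apos zb ze zf by linarith
    qed

    have n_4_3_1: "G 4 3 1 \<noteq> 0"
    proof
      assume "G 4 3 1 = 0"
      then show False using v_4_3_1 apos zb ze zf by linarith
    qed

    have z_6_0_2: "G 6 0 2 = 0" using v_6_0_2 zb ze zf by simp

    have z_0_4_5: "G 0 4 5 = 0" using v_0_4_5 zb ze zf by simp

    have n_1_6_2: "G 1 6 2 \<noteq> 0"
    proof
      assume "G 1 6 2 = 0"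
      then show False using v_1_6_2 apos zb ze zf by linarith
    qed

    have n_2_1_6: "G 2 1 6 \<noteq> 0"
    proof
      assume "G 2 1 6 = 0"
      then show False using v_2_1_6 apos zb ze zf by linarith
    qed

    have n_3_3_3: "G 3 3 3 \<noteq> 0"
    proof
      assume "G 3 3 3 = 0"
      then show False using v_3_3_3 apos zb ze zf by linarith
    qed

    have z_4_5_0: "G 4 5 0 = 0" using v_4_5_0 zb ze zf by simp

    have z_5_0_4: "G 5 0 4 = 0" using v_5_0_4 zb ze zf by simp

    have n_6_2_1: "G 6 2 1 \<noteq> 0"
    proof
      assume "G 6 2 1 = 0"
      then show False using v_6_2_1 apos zb ze zf by linarith
    qed

    have z_0_6_4: "G 0 6 4 = 0" using v_0_6_4 zb ze zf by simp

    have n_1_1_8: "G 1 1 8 \<noteq> 0"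
    proof
      assume "G 1 1 8 = 0"
      then show False using v_1_1_8 apos zb ze zf by linarith
    qed

    have n_1_8_1: "G 1 8 1 \<noteq> 0"
    proof
      assume "G 1 8 1 = 0"
      then show False using v_1_8_1 apos zb ze zf by linarith
    qed

    have n_2_3_5: "G 2 3 5 \<noteq> 0"
    proof
      assume "G 2 3 5 = 0"
      then show False using v_2_3_5 apos zb ze zf by linarith
    qed

    have n_3_5_2: "G 3 5 2 \<noteq> 0"
    proof
      assume "G 3 5 2 = 0"
      then show False using v_3_5_2 apos zb ze zf by linarith
    qed

    have z_4_0_6: "G 4 0 6 = 0" using v_4_0_6 zb ze zf by simp

    have n_5_2_3: "G 5 2 3 \<noteq> 0"
    proof
      assume "G 5 2 3 = 0"
      then show False using v_5_2_3 apos zb ze zf by linarith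
    qed

    have z_6_4_0: "G 6 4 0 = 0" using v_6_4_0 zb ze zf by simp

    have z_0_1_10: "G 0 1 10 = 0" using v_0_1_10 zb ze zf by simp

    have z_0_8_3: "G 0 8 3 = 0" using v_0_8_3 zb ze zf by simp

    have z_1_3_7: "G 1 3 7 = 0" using v_1_3_7 zb ze zf by simp

    have z_1_10_0: "G 1 10 0 = 0" using v_1_10_0 zb ze zf by simp

    have z_2_5_4: "G 2 5 4 = 0" using v_2_5_4 zb ze zf by simp

    have z_3_0_8: "G 3 0 8 = 0" using v_3_0_8 zb ze zf by simp

    have z_3_7_1: "G 3 7 1 = 0" using v_3_7_1 zb ze zf by simp

    have z_4_2_5: "G 4 2 5 = 0" using v_4_2_5 zb ze zf by simp

    have z_5_4_2: "G 5 4 2 = 0" using v_5_4_2 zb ze zf by simp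

    show ?thesis unfolding M11_def supp3_def
      by (simp add: zb ze zf an0 n_0_1_3 n_1_3_0 n_3_0_1 n_0_3_2 n_2_0_3 n_3_2_0 n_0_5_1 n_1_0_5 n_2_2_2 n_5_1_0 n_0_0_7 n_0_7_0 n_1_2_4 n_2_4_1 n_4_1_2 n_7_0_0 n_1_4_3 n_3_1_4 n_4_3_1 n_1_6_2 n_2_1_6 n_3_3_3 n_6_2_1 n_1_1_8 n_1_8_1 n_2_3_5 n_3_5_2 n_5_2_3 z_1_1_1 z_0_2_6 z_2_6_0 z_6_0_2 z_0_4_5 z_4_5_0 z_5_0_4 z_0_6_4 z_4_0_6 z_6_4_0 z_0_1_10 z_0_8_3 z_1_3_7 z_1_10_0 z_2_5_4 z_3_0_8 z_3_7_1 z_4_2_5 z_5_4_2 del: One_nat_def)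
  qed

  have c30: "G 8 1 1 \<noteq> 14 \<Longrightarrow> card (M11 \<inter> supp3 G) = 30"
  proof -
    assume a14: "G 8 1 1 \<noteq> 14"

    have n_1_1_1: "G 1 1 1 \<noteq> 0"
    proof
      assume "G 1 1 1 = 0"
      then have "G 8 1 1 = 14" using v_1_1_1 zf by linarith
      then show False using a14 by simp
    qed

    have n_0_1_3: "G 0 1 3 \<noteq> 0"
    proof
      assume "G 0 1 3 = 0"
      then show False using v_0_1_3 apos zb ze zf by linarith
    qed

    have n_1_3_0: "G 1 3 0 \<noteq> 0"
    proof
      assume "G 1 3 0 = 0"
      then show False using v_1_3_0 apos zb ze zf by linarith
    qed

    have n_3_0_1: "G 3 0 1 \<noteq> 0"
    proof
      assume "G 3 0 1 = 0"
      then show False using v_3_0_1 apos zb ze zf by linarith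
    qed

    have n_0_3_2: "G 0 3 2 \<noteq> 0"
    proof
      assume "G 0 3 2 = 0"
      then show False using v_0_3_2 apos zb ze zf by linarith
    qed

    have n_2_0_3: "G 2 0 3 \<noteq> 0"
    proof
      assume "G 2 0 3 = 0"
      then show False using v_2_0_3 apos zb ze zf by linarith
    qed

    have n_3_2_0: "G 3 2 0 \<noteq> 0"
    proof
      assume "G 3 2 0 = 0"
      then show False using v_3_2_0 apos zb ze zf by linarith
    qed

    have n_0_5_1: "G 0 5 1 \<noteq> 0"
    proof
      assume "G 0 5 1 = 0"
      then show False using v_0_5_1 apos zb ze zf by linarith
    qed

    have n_1_0_5: "G 1 0 5 \<noteq> 0"
    proof
      assume "G 1 0 5 = 0"
      then show False using v_1_0_5 apos zb ze zf by linarith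
    qed

    have n_2_2_2: "G 2 2 2 \<noteq> 0"
    proof
      assume "G 2 2 2 = 0"
      then show False using v_2_2_2 apos zb ze zf by linarith
    qed

    have n_5_1_0: "G 5 1 0 \<noteq> 0"
    proof
      assume "G 5 1 0 = 0"
      then show False using v_5_1_0 apos zb ze zf by linarith
    qed

    have n_0_0_7: "G 0 0 7 \<noteq> 0"
    proof
      assume "G 0 0 7 = 0"
      then show False using v_0_0_7 apos zb ze zf by linarith
    qed

    have n_0_7_0: "G 0 7 0 \<noteq> 0"
    proof
      assume "G 0 7 0 = 0"
      then show False using v_0_7_0 apos zb ze zf by linarith
    qed

    have n_1_2_4: "G 1 2 4 \<noteq> 0"
    proof
      assume "G 1 2 4 = 0"
      then show False using v_1_2_4 apos zb ze zf by linarith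
    qed

    have n_2_4_1: "G 2 4 1 \<noteq> 0"
    proof
      assume "G 2 4 1 = 0"
      then show False using v_2_4_1 apos zb ze zf by linarith
    qed

    have n_4_1_2: "G 4 1 2 \<noteq> 0"
    proof
      assume "G 4 1 2 = 0"
      then show False using v_4_1_2 apos zb ze zf by linarith
    qed

    have n_7_0_0: "G 7 0 0 \<noteq> 0"
    proof
      assume "G 7 0 0 = 0"
      then show False using v_7_0_0 apos zb ze zf by linarith
    qed

    have z_0_2_6: "G 0 2 6 = 0" using v_0_2_6 zb ze zf by simp

    have n_1_4_3: "G 1 4 3 \<noteq> 0"
    proof
      assume "G 1 4 3 = 0"
      then show False using v_1_4_3 apos zb ze zf by linarith
    qed

    have z_2_6_0: "G 2 6 0 = 0" using v_2_6_0 zb ze zf by simp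

    have n_3_1_4: "G 3 1 4 \<noteq> 0"
    proof
      assume "G 3 1 4 = 0"
      then show False using v_3_1_4 apos zb ze zf by linarith
    qed

    have n_4_3_1: "G 4 3 1 \<noteq> 0"
    proof
      assume "G 4 3 1 = 0"
      then show False using v_4_3_1 apos zb ze zf by linarith
    qed

    have z_6_0_2: "G 6 0 2 = 0" using v_6_0_2 zb ze zf by simp

    have z_0_4_5: "G 0 4 5 = 0" using v_0_4_5 zb ze zf by simp

    have n_1_6_2: "G 1 6 2 \<noteq> 0"
    proof
      assume "G 1 6 2 = 0"
      then show False using v_1_6_2 apos zb ze zf by linarith
    qed

    have n_2_1_6: "G 2 1 6 \<noteq> 0"
    proof
      assume "G 2 1 6 = 0"
      then show False using v_2_1_6 apos zb ze zf by linarith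
    qed

    have n_3_3_3: "G 3 3 3 \<noteq> 0"
    proof
      assume "G 3 3 3 = 0"
      then show False using v_3_3_3 apos zb ze zf by linarith
    qed

    have z_4_5_0: "G 4 5 0 = 0" using v_4_5_0 zb ze zf by simp

    have z_5_0_4: "G 5 0 4 = 0" using v_5_0_4 zb ze zf by simp

    have n_6_2_1: "G 6 2 1 \<noteq> 0"
    proof
      assume "G 6 2 1 = 0"
      then show False using v_6_2_1 apos zb ze zf by linarith
    qed

    have z_0_6_4: "G 0 6 4 = 0" using v_0_6_4 zb ze zf by simp

    have n_1_1_8: "G 1 1 8 \<noteq> 0"
    proof
      assume "G 1 1 8 = 0"
      then show False using v_1_1_8 apos zb ze zf by linarith
    qed

    have n_1_8_1: "G 1 8 1 \<noteq> 0"
    proof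
      assume "G 1 8 1 = 0"
      then show False using v_1_8_1 apos zb ze zf by linarith
    qed

    have n_2_3_5: "G 2 3 5 \<noteq> 0"
    proof
      assume "G 2 3 5 = 0"
      then show False using v_2_3_5 apos zb ze zf by linarith
    qed

    have n_3_5_2: "G 3 5 2 \<noteq> 0"
    proof
      assume "G 3 5 2 = 0"
      then show False using v_3_5_2 apos zb ze zf by linarith
    qed

    have z_4_0_6: "G 4 0 6 = 0" using v_4_0_6 zb ze zf by simp

    have n_5_2_3: "G 5 2 3 \<noteq> 0"
    proof
      assume "G 5 2 3 = 0"
      then show False using v_5_2_3 apos zb ze zf by linarith
    qed

    have z_6_4_0: "G 6 4 0 = 0" using v_6_4_0 zb ze zf by simp

    have z_0_1_10: "G 0 1 10 = 0" using v_0_1_10 zb ze zf by simp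

    have z_0_8_3: "G 0 8 3 = 0" using v_0_8_3 zb ze zf by simp

    have z_1_3_7: "G 1 3 7 = 0" using v_1_3_7 zb ze zf by simp

    have z_1_10_0: "G 1 10 0 = 0" using v_1_10_0 zb ze zf by simp

    have z_2_5_4: "G 2 5 4 = 0" using v_2_5_4 zb ze zf by simp

    have z_3_0_8: "G 3 0 8 = 0" using v_3_0_8 zb ze zf by simp

    have z_3_7_1: "G 3 7 1 = 0" using v_3_7_1 zb ze zf by simp

    have z_4_2_5: "G 4 2 5 = 0" using v_4_2_5 zb ze zf by simp

    have z_5_4_2: "G 5 4 2 = 0" using v_5_4_2 zb ze zf by simp

    show ?thesis unfolding M11_def supp3_def
      by (simp add: zb ze zf an0 n_1_1_1 n_0_1_3 n_1_3_0 n_3_0_1 n_0_3_2 n_2_0_3 n_3_2_0 n_0_5_1 n_1_0_5 n_2_2_2 n_5_1_0 n_0_0_7 n_0_7_0 n_1_2_4 n_2_4_1 n_4_1_2 n_7_0_0 n_1_4_3 n_3_1_4 n_4_3_1 n_1_6_2 n_2_1_6 n_3_3_3 n_6_2_1 n_1_1_8 n_1_8_1 n_2_3_5 n_3_5_2 n_5_2_3 z_0_2_6 z_2_6_0 z_6_0_2 z_0_4_5 z_4_5_0 z_5_0_4 z_0_6_4 z_4_0_6 z_6_4_0 z_0_1_10 z_0_8_3 z_1_3_7 z_1_10_0 z_2_5_4 z_3_0_8 z_3_7_1 z_4_2_5 z_5_4_2 del: One_nat_def)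
  qed

  show ?thesis using c29 c30 card_M11 by auto
qed


end

context sp11 begin
lemma leaf0:
  assumes h0: "G 1 1 1 = 0" and h1: "0 < G 10 0 1"
  shows "31 \<le> card (supp3 G)"
proof -

  have p_0_3_2: "0 < G 0 3 2" using h0 h1 v_0_3_2 v_1_1_1  by linarith

  have p_2_0_3: "0 < G 2 0 3" using h0 h1 v_1_1_1 v_2_0_3  by linarith

  have p_3_2_0: "0 < G 3 2 0" using h0 h1 v_1_1_1 v_3_2_0  by linarith

  have p_0_5_1: "0 < G 0 5 1" using h0 h1 v_0_5_1 v_1_1_1  by linarith

  have p_1_0_5: "0 < G 1 0 5" using h0 h1 v_1_0_5 v_1_1_1  by linarith

  have p_2_2_2: "0 < G 2 2 2" using h0 h1 v_1_1_1 v_2_2_2 nn[of 1 1 1] by linarith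

  have p_5_1_0: "0 < G 5 1 0" using h0 h1 v_1_1_1 v_5_1_0  by linarith

  have p_0_0_7: "0 < G 0 0 7" using h0 h1 v_0_0_7 v_1_1_1  by linarith

  have p_0_7_0: "0 < G 0 7 0" using h0 h1 v_0_7_0 v_1_1_1  by linarith

  have p_1_2_4: "0 < G 1 2 4" using h0 h1 v_1_1_1 v_1_2_4 v_2_1_6 nn[of 2 1 6] by linarith

  have p_2_4_1: "0 < G 2 4 1" using h0 h1 v_1_1_1 v_1_6_2 v_2_4_1 nn[of 1 6 2] by linarith

  have p_4_1_2: "0 < G 4 1 2" using h0 h1 v_1_1_1 v_4_1_2 v_6_2_1 nn[of 6 2 1] by linarith

  have p_7_0_0: "0 < G 7 0 0" using h0 h1 v_1_1_1 v_7_0_0  by linarith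

  have p_1_4_3: "0 < G 1 4 3" using h0 h1 v_1_1_1 v_1_4_3 v_2_3_5 nn[of 2 3 5] nn[of 1 1 1] by linarith

  have p_3_1_4: "0 < G 3 1 4" using h0 h1 v_1_1_1 v_3_1_4 v_5_2_3 nn[of 5 2 3] nn[of 1 1 1] by linarith

  have p_4_3_1: "0 < G 4 3 1" using h0 h1 v_1_1_1 v_3_5_2 v_4_3_1 nn[of 3 5 2] nn[of 1 1 1] by linarith

  have p_6_0_2: "0 < G 6 0 2" using h0 h1 v_1_1_1 v_6_0_2 nn[of 10 0 1] by linarith

  have p_1_6_2: "0 < G 1 6 2" using h0 h1 v_1_1_1 v_1_6_2 v_2_6_0 nn[of 2 6 0] nn[of 1 1 1] by linarith

  have p_2_1_6: "0 < G 2 1 6" using h0 h1 v_0_2_6 v_1_1_1 v_2_1_6 nn[of 0 2 6] nn[of 1 1 1] by linarith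

  have p_3_3_3: "0 < G 3 3 3" using h0 h1 v_0_2_6 v_1_1_1 v_1_6_2 v_3_3_3 nn[of 0 2 6] nn[of 1 6 2] nn[of 10 0 1] by linarith

  have p_5_0_4: "0 < G 5 0 4" using h0 h1 v_1_1_1 v_5_0_4 nn[of 10 0 1] by linarith

  have p_6_2_1: "0 < G 6 2 1" using h0 h1 v_1_1_1 v_6_0_2 v_6_2_1 nn[of 6 0 2] nn[of 1 1 1] by linarith

  have p_1_1_8: "0 < G 1 1 8" using h0 h1 v_0_2_6 v_1_1_1 v_1_1_8 nn[of 0 2 6] nn[of 1 1 1] by linarith

  have p_1_8_1: "0 < G 1 8 1" using h0 h1 v_1_1_1 v_1_8_1 v_2_6_0 nn[of 2 6 0] nn[of 1 1 1] by linarith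

  have p_2_3_5: "0 < G 2 3 5" using h0 h1 v_1_1_1 v_2_3_5 v_2_5_4 nn[of 2 5 4] nn[of 1 1 1] by linarith

  have p_3_5_2: "0 < G 3 5 2" using h0 h1 v_1_1_1 v_3_5_2 v_5_4_2 nn[of 5 4 2] nn[of 1 1 1] by linarith

  have p_4_0_6: "0 < G 4 0 6" using h0 h1 v_1_1_1 v_4_0_6 nn[of 10 0 1] by linarith

  have p_5_2_3: "0 < G 5 2 3" using h0 h1 v_1_1_1 v_4_2_5 v_5_2_3 nn[of 4 2 5] nn[of 1 1 1] by linarith

  have p_8_1_1: "0 < G 8 1 1" using h0 h1 v_1_1_1 v_6_0_2 nn[of 6 0 2] nn[of 1 1 1] by linarith

  have p_3_0_8: "0 < G 3 0 8" using h0 h1 v_1_1_1 v_3_0_8 nn[of 10 0 1] by linarith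

  have p_3_7_1: "0 < G 3 7 1" using h0 h1 v_1_1_1 v_2_6_0 v_3_7_1 nn[of 2 6 0] nn[of 10 0 1] by linarith

  have sub: "({(0, 3, 2), (2, 0, 3), (3, 2, 0), (0, 5, 1), (1, 0, 5), (2, 2, 2), (5, 1, 0), (0, 0, 7), (0, 7, 0), (1, 2, 4), (2, 4, 1), (4, 1, 2), (7, 0, 0), (1, 4, 3), (3, 1, 4), (4, 3, 1), (6, 0, 2), (1, 6, 2), (2, 1, 6), (3, 3, 3), (5, 0, 4), (6, 2, 1), (1, 1, 8), (1, 8, 1), (2, 3, 5), (3, 5, 2), (4, 0, 6), (5, 2, 3), (8, 1, 1), (3, 0, 8), (3, 7, 1)} :: (nat \<times> nat \<times> nat) set) \<subseteq> supp3 G"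
    using p_0_3_2[THEN less_imp_neq, THEN not_sym] p_2_0_3[THEN less_imp_neq, THEN not_sym] p_3_2_0[THEN less_imp_neq, THEN not_sym] p_0_5_1[THEN less_imp_neq, THEN not_sym] p_1_0_5[THEN less_imp_neq, THEN not_sym] p_2_2_2[THEN less_imp_neq, THEN not_sym] p_5_1_0[THEN less_imp_neq, THEN not_sym] p_0_0_7[THEN less_imp_neq, THEN not_sym] p_0_7_0[THEN less_imp_neq, THEN not_sym] p_1_2_4[THEN less_imp_neq, THEN not_sym] p_2_4_1[THEN less_imp_neq, THEN not_sym] p_4_1_2[THEN less_imp_neq, THEN not_sym] p_7_0_0[THEN less_imp_neq, THEN not_sym] p_1_4_3[THEN less_imp_neq, THEN not_sym] p_3_1_4[THEN less_imp_neq, THEN not_sym] p_4_3_1[THEN less_imp_neq, THEN not_sym] p_6_0_2[THEN less_imp_neq, THEN not_sym] p_1_6_2[THEN less_imp_neq, THEN not_sym] p_2_1_6[THEN less_imp_neq, THEN not_sym] p_3_3_3[THEN less_imp_neq, THEN not_sym] p_5_0_4[THEN less_imp_neq, THEN not_sym] p_6_2_1[THEN less_imp_neq, THEN not_sym] p_1_1_8[THEN less_imp_neq, THEN not_sym] p_1_8_1[THEN less_imp_neq, THEN not_sym] p_2_3_5[THEN less_imp_neq, THEN not_sym] p_3_5_2[THEN less_imp_neq, THEN not_sym] p_4_0_6[THEN less_imp_neq, THEN not_sym] p_5_2_3[THEN less_imp_neq, THEN not_sym] p_8_1_1[THEN less_imp_neq, THEN not_sym] p_3_0_8[THEN less_imp_neq,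 THEN not_sym] p_3_7_1[THEN less_imp_neq, THEN not_sym] by (simp add: supp3_def)

  have "card ({(0, 3, 2), (2, 0, 3), (3, 2, 0), (0, 5, 1), (1, 0, 5), (2, 2, 2), (5, 1, 0), (0, 0, 7), (0, 7, 0), (1, 2, 4), (2, 4, 1), (4, 1, 2), (7, 0, 0), (1, 4, 3), (3, 1, 4), (4, 3, 1), (6, 0, 2), (1, 6, 2), (2, 1, 6), (3, 3, 3), (5, 0, 4), (6, 2, 1), (1, 1, 8), (1, 8, 1), (2, 3, 5), (3, 5, 2), (4, 0, 6), (5, 2, 3), (8, 1, 1), (3, 0, 8), (3, 7, 1)} :: (nat \<times> nat \<times> nat) set) = 31" by simp
  then show ?thesis using card_mono[OF fin sub] by simp
qed

lemma leaf1:
  assumes h0: "G 0 2 6 = 0" and h1: "0 < G 10 0 1" and h2: "0 < G 1 1 1"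
  shows "31 \<le> card (supp3 G)"
proof -

  have p_1_1_1: "0 < G 1 1 1" using h0 h1 h2 v_0_2_6 v_1_1_1 nn[of 1 1 1] by linarith

  have p_0_1_3: "0 < G 0 1 3" using h0 h1 h2 v_0_1_3 v_0_2_6 v_1_1_1 nn[of 0 2 6] by linarith

  have p_0_3_2: "0 < G 0 3 2" using h0 h1 h2 v_0_2_6 v_0_3_2 v_1_1_1  by linarith

  have p_2_0_3: "0 < G 2 0 3" using h0 h1 h2 v_0_2_6 v_1_1_1 v_2_0_3  by linarith

  have p_3_2_0: "0 < G 3 2 0" using h0 h1 h2 v_0_2_6 v_1_1_1 v_3_2_0  by linarith

  have p_0_5_1: "0 < G 0 5 1" using h0 h1 h2 v_0_2_6 v_0_5_1 v_1_1_1  by linarith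

  have p_1_0_5: "0 < G 1 0 5" using h0 h1 h2 v_0_2_6 v_1_0_5 v_1_1_1  by linarith

  have p_2_2_2: "0 < G 2 2 2" using h0 h1 h2 v_0_2_6 v_1_1_1 v_2_1_6 v_2_2_2 nn[of 2 1 6] nn[of 0 2 6] by linarith

  have p_5_1_0: "0 < G 5 1 0" using h0 h1 h2 v_0_2_6 v_1_1_1 v_5_1_0  by linarith

  have p_0_0_7: "0 < G 0 0 7" using h0 h1 h2 v_0_0_7 v_0_2_6 v_1_1_1  by linarith

  have p_0_7_0: "0 < G 0 7 0" using h0 h1 h2 v_0_2_6 v_0_7_0 v_1_1_1  by linarith

  have p_1_2_4: "0 < G 1 2 4" using h0 h1 h2 v_0_2_6 v_1_1_1 v_1_2_4 v_2_1_6 nn[of 2 1 6] by linarith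

  have p_2_4_1: "0 < G 2 4 1" using h0 h1 h2 v_0_2_6 v_1_1_1 v_1_6_2 v_2_4_1 nn[of 1 6 2] by linarith

  have p_4_1_2: "0 < G 4 1 2" using h0 h1 h2 v_0_2_6 v_1_1_1 v_4_1_2 v_6_2_1 nn[of 6 2 1] by linarith

  have p_7_0_0: "0 < G 7 0 0" using h0 h1 h2 v_0_2_6 v_1_1_1 v_7_0_0  by linarith

  have p_3_1_4: "0 < G 3 1 4" using h0 h1 h2 v_0_2_6 v_1_1_1 v_2_1_6 v_3_1_4 nn[of 2 1 6] nn[of 0 2 6] nn[of 10 0 1] by linarith

  have p_4_3_1: "0 < G 4 3 1" using h0 h1 h2 v_0_2_6 v_1_1_1 v_1_4_3 v_4_3_1 nn[of 1 4 3] nn[of 0 2 6] nn[of 10 0 1] by linarith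

  have p_6_0_2: "0 < G 6 0 2" using h0 h1 h2 v_0_2_6 v_1_1_1 v_6_0_2 nn[of 10 0 1] by linarith

  have p_3_3_3: "0 < G 3 3 3" using h0 h1 h2 v_0_2_6 v_1_1_1 v_1_4_3 v_2_5_4 v_3_3_3 nn[of 1 4 3] nn[of 2 5 4] nn[of 10 0 1] by linarith

  have p_5_0_4: "0 < G 5 0 4" using h0 h1 h2 v_0_2_6 v_1_1_1 v_5_0_4 nn[of 10 0 1] by linarith

  have p_6_2_1: "0 < G 6 2 1" using h0 h1 h2 v_0_2_6 v_1_1_1 v_3_1_4 v_6_2_1 nn[of 3 1 4] nn[of 0 2 6] nn[of 10 0 1] by linarith

  have p_3_5_2: "0 < G 3 5 2" using h0 h1 h2 v_0_2_6 v_1_1_1 v_2_6_0 v_3_5_2 v_4_3_1 nn[of 2 6 0] nn[of 4 3 1] nn[of 10 0 1] by linarith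

  have p_4_0_6: "0 < G 4 0 6" using h0 h1 h2 v_0_2_6 v_1_1_1 v_4_0_6 nn[of 10 0 1] by linarith

  have p_5_2_3: "0 < G 5 2 3" using h0 h1 h2 v_0_2_6 v_0_4_5 v_1_1_1 v_3_1_4 v_5_2_3 nn[of 3 1 4] nn[of 0 4 5] nn[of 10 0 1] by linarith

  have p_8_1_1: "0 < G 8 1 1" using h0 h1 h2 v_0_2_6 v_1_1_1 v_6_2_1 nn[of 6 2 1] nn[of 10 0 1] by linarith

  have p_3_0_8: "0 < G 3 0 8" using h0 h1 h2 v_0_2_6 v_1_1_1 v_3_0_8 nn[of 10 0 1] by linarith

  have p_3_7_1: "0 < G 3 7 1" using h0 h1 h2 v_0_2_6 v_1_1_1 v_2_6_0 v_3_7_1 nn[of 2 6 0] nn[of 10 0 1] by linarith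

  have p_4_2_5: "0 < G 4 2 5" using h0 h1 h2 v_0_2_6 v_0_4_5 v_1_1_1 v_4_2_5 nn[of 0 4 5] nn[of 10 0 1] by linarith

  have p_5_4_2: "0 < G 5 4 2" using h0 h1 h2 v_0_2_6 v_1_1_1 v_2_6_0 v_5_4_2 nn[of 2 6 0] nn[of 10 0 1] by linarith

  have p_7_1_3: "0 < G 7 1 3" using h0 h1 h2 v_0_2_6 v_0_4_5 v_1_1_1 nn[of 0 4 5] nn[of 10 0 1] by linarith

  have p_10_0_1: "0 < G 10 0 1" using h0 h1 h2 v_0_2_6 v_1_1_1 nn[of 10 0 1] by linarith

  have sub: "({(1, 1, 1), (0, 1, 3), (0, 3, 2), (2, 0, 3), (3, 2, 0), (0, 5, 1), (1, 0, 5), (2, 2, 2), (5, 1, 0), (0, 0, 7), (0, 7, 0), (1, 2, 4), (2, 4, 1), (4, 1, 2), (7, 0, 0), (3, 1, 4), (4, 3, 1), (6, 0, 2), (3, 3, 3), (5, 0, 4), (6, 2, 1), (3, 5, 2), (4, 0, 6), (5, 2, 3), (8, 1, 1), (3, 0, 8), (3, 7, 1), (4, 2, 5), (5, 4, 2), (7, 1, 3), (10, 0, 1)} :: (nat \<times> nat \<times> nat) set) \<subseteq> supp3 G"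
    using p_1_1_1[THEN less_imp_neq, THEN not_sym] p_0_1_3[THEN less_imp_neq, THEN not_sym] p_0_3_2[THEN less_imp_neq, THEN not_sym] p_2_0_3[THEN less_imp_neq, THEN not_sym] p_3_2_0[THEN less_imp_neq, THEN not_sym] p_0_5_1[THEN less_imp_neq, THEN not_sym] p_1_0_5[THEN less_imp_neq, THEN not_sym] p_2_2_2[THEN less_imp_neq, THEN not_sym] p_5_1_0[THEN less_imp_neq, THEN not_sym] p_0_0_7[THEN less_imp_neq, THEN not_sym] p_0_7_0[THEN less_imp_neq, THEN not_sym] p_1_2_4[THEN less_imp_neq, THEN not_sym] p_2_4_1[THEN less_imp_neq, THEN not_sym] p_4_1_2[THEN less_imp_neq, THEN not_sym] p_7_0_0[THEN less_imp_neq, THEN not_sym] p_3_1_4[THEN less_imp_neq, THEN not_sym] p_4_3_1[THEN less_imp_neq, THEN not_sym] p_6_0_2[THEN less_imp_neq, THEN not_sym] p_3_3_3[THEN less_imp_neq, THEN not_sym] p_5_0_4[THEN less_imp_neq, THEN not_sym] p_6_2_1[THEN less_imp_neq, THEN not_sym] p_3_5_2[THEN less_imp_neq, THEN not_sym] p_4_0_6[THEN less_imp_neq, THEN not_sym] p_5_2_3[THEN less_imp_neq, THEN not_sym] p_8_1_1[THEN less_imp_neq, THEN not_sym] p_3_0_8[THEN less_imp_neq, THEN not_sym] p_3_7_1[THEN less_imp_neq, THEN not_sym] p_4_2_5[THEN less_imp_neq, THEN not_sym] p_5_4_2[THEN less_imp_neq, THEN not_sym] p_7_1_3[THEN less_imp_neq,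 THEN not_sym] p_10_0_1[THEN less_imp_neq, THEN not_sym] by (simp add: supp3_def)

  have "card ({(1, 1, 1), (0, 1, 3), (0, 3, 2), (2, 0, 3), (3, 2, 0), (0, 5, 1), (1, 0, 5), (2, 2, 2), (5, 1, 0), (0, 0, 7), (0, 7, 0), (1, 2, 4), (2, 4, 1), (4, 1, 2), (7, 0, 0), (3, 1, 4), (4, 3, 1), (6, 0, 2), (3, 3, 3), (5, 0, 4), (6, 2, 1), (3, 5, 2), (4, 0, 6), (5, 2, 3), (8, 1, 1), (3, 0, 8), (3, 7, 1), (4, 2, 5), (5, 4, 2), (7, 1, 3), (10, 0, 1)} :: (nat \<times> nat \<times> nat) set) = 31" by simp
  then show ?thesis using card_mono[OF fin sub] by simp
qed

lemma leaf2:
  assumes h0: "0 < G 10 0 1" and h1: "0 < G 1 1 1" and h2: "0 < G 0 2 6"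
  shows "31 \<le> card (supp3 G)"
proof -

  have p_1_1_1: "0 < G 1 1 1" using h0 h1 h2 v_0_2_6 v_1_1_1 nn[of 1 1 1] by linarith

  have p_0_3_2: "0 < G 0 3 2" using h0 h1 h2 v_0_2_6 v_0_3_2 v_1_1_1  by linarith

  have p_2_0_3: "0 < G 2 0 3" using h0 h1 h2 v_0_2_6 v_1_1_1 v_2_0_3  by linarith

  have p_3_2_0: "0 < G 3 2 0" using h0 h1 h2 v_0_2_6 v_1_1_1 v_3_2_0  by linarith

  have p_0_5_1: "0 < G 0 5 1" using h0 h1 h2 v_0_2_6 v_0_5_1 v_1_1_1  by linarith

  have p_1_0_5: "0 < G 1 0 5" using h0 h1 h2 v_0_2_6 v_1_0_5 v_1_1_1  by linarith

  have p_5_1_0: "0 < G 5 1 0" using h0 h1 h2 v_0_2_6 v_1_1_1 v_5_1_0  by linarith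

  have p_0_0_7: "0 < G 0 0 7" using h0 h1 h2 v_0_0_7 v_0_2_6 v_1_1_1  by linarith

  have p_0_7_0: "0 < G 0 7 0" using h0 h1 h2 v_0_2_6 v_0_7_0 v_1_1_1  by linarith

  have p_1_2_4: "0 < G 1 2 4" using h0 h1 h2 v_0_2_6 v_1_1_1 v_1_2_4 v_2_1_6 nn[of 2 1 6] by linarith

  have p_2_4_1: "0 < G 2 4 1" using h0 h1 h2 v_0_2_6 v_1_1_1 v_1_6_2 v_2_4_1 nn[of 1 6 2] by linarith

  have p_4_1_2: "0 < G 4 1 2" using h0 h1 h2 v_0_2_6 v_1_1_1 v_4_1_2 v_6_2_1 nn[of 6 2 1] by linarith

  have p_7_0_0: "0 < G 7 0 0" using h0 h1 h2 v_0_2_6 v_1_1_1 v_7_0_0  by linarith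

  have p_0_2_6: "0 < G 0 2 6" using h0 h1 h2 v_0_2_6 v_1_1_1 nn[of 0 2 6] by linarith

  have p_6_0_2: "0 < G 6 0 2" using h0 h1 h2 v_0_2_6 v_1_1_1 v_6_0_2 nn[of 10 0 1] by linarith

  have p_0_4_5: "0 < G 0 4 5" using h0 h1 h2 v_0_2_6 v_0_4_5 v_1_1_1 nn[of 0 2 6] by linarith

  have p_3_3_3: "0 < G 3 3 3" using h0 h1 h2 v_0_2_6 v_1_1_1 v_1_4_3 v_2_5_4 v_3_3_3 nn[of 1 4 3] nn[of 2 5 4] nn[of 10 0 1] by linarith

  have p_5_0_4: "0 < G 5 0 4" using h0 h1 h2 v_0_2_6 v_1_1_1 v_5_0_4 nn[of 10 0 1] by linarith

  have p_0_6_4: "0 < G 0 6 4" using h0 h1 h2 v_0_2_6 v_0_6_4 v_1_1_1 nn[of 0 2 6] by linarith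

  have p_1_1_8: "0 < G 1 1 8" using h0 h1 h2 v_0_2_6 v_1_1_1 v_1_1_8 v_2_1_6 nn[of 2 1 6] nn[of 0 2 6] by linarith

  have p_2_3_5: "0 < G 2 3 5" using h0 h1 h2 v_0_2_6 v_1_1_1 v_1_4_3 v_2_3_5 v_2_6_0 nn[of 1 4 3] nn[of 2 6 0] nn[of 0 2 6] by linarith

  have p_3_5_2: "0 < G 3 5 2" using h0 h1 h2 v_0_2_6 v_1_1_1 v_2_6_0 v_3_5_2 v_4_3_1 nn[of 2 6 0] nn[of 4 3 1] nn[of 10 0 1] by linarith

  have p_4_0_6: "0 < G 4 0 6" using h0 h1 h2 v_0_2_6 v_1_1_1 v_4_0_6 nn[of 10 0 1] by linarith

  have p_5_2_3: "0 < G 5 2 3" using h0 h1 h2 v_0_2_6 v_1_1_1 v_3_1_4 v_5_2_3 v_6_0_2 nn[of 3 1 4] nn[of 6 0 2] nn[of 0 2 6] by linarith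

  have p_8_1_1: "0 < G 8 1 1" using h0 h1 h2 v_0_2_6 v_1_1_1 v_6_2_1 nn[of 6 2 1] nn[of 10 0 1] by linarith

  have p_0_1_10: "0 < G 0 1 10" using h0 h1 h2 v_0_1_10 v_0_2_6 v_1_1_1 nn[of 0 2 6] by linarith

  have p_0_8_3: "0 < G 0 8 3" using h0 h1 h2 v_0_2_6 v_0_8_3 v_1_1_1 nn[of 0 2 6] by linarith

  have p_1_3_7: "0 < G 1 3 7" using h0 h1 h2 v_0_2_6 v_1_1_1 v_1_3_7 v_2_6_0 nn[of 2 6 0] nn[of 0 2 6] by linarith

  have p_2_5_4: "0 < G 2 5 4" using h0 h1 h2 v_0_2_6 v_1_1_1 v_2_5_4 v_2_6_0 nn[of 2 6 0] nn[of 0 2 6] by linarith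

  have p_3_0_8: "0 < G 3 0 8" using h0 h1 h2 v_0_2_6 v_1_1_1 v_3_0_8 nn[of 10 0 1] by linarith

  have p_3_7_1: "0 < G 3 7 1" using h0 h1 h2 v_0_2_6 v_1_1_1 v_2_6_0 v_3_7_1 nn[of 2 6 0] nn[of 10 0 1] by linarith

  have sub: "({(1, 1, 1), (0, 3, 2), (2, 0, 3), (3, 2, 0), (0, 5, 1), (1, 0, 5), (5, 1, 0), (0, 0, 7), (0, 7, 0), (1, 2, 4), (2, 4, 1), (4, 1, 2), (7, 0, 0), (0, 2, 6), (6, 0, 2), (0, 4, 5), (3, 3, 3), (5, 0, 4), (0, 6, 4), (1, 1, 8), (2, 3, 5), (3, 5, 2), (4, 0, 6), (5, 2, 3), (8, 1, 1), (0, 1, 10), (0, 8, 3), (1, 3, 7), (2, 5, 4), (3, 0, 8), (3, 7, 1)} :: (nat \<times> nat \<times> nat) set) \<subseteq> supp3 G"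
    using p_1_1_1[THEN less_imp_neq, THEN not_sym] p_0_3_2[THEN less_imp_neq, THEN not_sym] p_2_0_3[THEN less_imp_neq, THEN not_sym] p_3_2_0[THEN less_imp_neq, THEN not_sym] p_0_5_1[THEN less_imp_neq, THEN not_sym] p_1_0_5[THEN less_imp_neq, THEN not_sym] p_5_1_0[THEN less_imp_neq, THEN not_sym] p_0_0_7[THEN less_imp_neq, THEN not_sym] p_0_7_0[THEN less_imp_neq, THEN not_sym] p_1_2_4[THEN less_imp_neq, THEN not_sym] p_2_4_1[THEN less_imp_neq, THEN not_sym] p_4_1_2[THEN less_imp_neq, THEN not_sym] p_7_0_0[THEN less_imp_neq, THEN not_sym] p_0_2_6[THEN less_imp_neq, THEN not_sym] p_6_0_2[THEN less_imp_neq, THEN not_sym] p_0_4_5[THEN less_imp_neq, THEN not_sym] p_3_3_3[THEN less_imp_neq, THEN not_sym] p_5_0_4[THEN less_imp_neq, THEN not_sym] p_0_6_4[THEN less_imp_neq, THEN not_sym] p_1_1_8[THEN less_imp_neq, THEN not_sym] p_2_3_5[THEN less_imp_neq, THEN not_sym] p_3_5_2[THEN less_imp_neq, THEN not_sym] p_4_0_6[THEN less_imp_neq, THEN not_sym] p_5_2_3[THEN less_imp_neq, THEN not_sym] p_8_1_1[THEN less_imp_neq, THEN not_sym] p_0_1_10[THEN less_imp_neq, THEN not_sym] p_0_8_3[THEN less_imp_neq, THEN not_sym] p_1_3_7[THEN less_imp_neq, THEN not_sym] p_2_5_4[THEN less_imp_neq, THEN not_sym] p_3_0_8[THEN less_imp_neq,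 THEN not_sym] p_3_7_1[THEN less_imp_neq, THEN not_sym] by (simp add: supp3_def)

  have "card ({(1, 1, 1), (0, 3, 2), (2, 0, 3), (3, 2, 0), (0, 5, 1), (1, 0, 5), (5, 1, 0), (0, 0, 7), (0, 7, 0), (1, 2, 4), (2, 4, 1), (4, 1, 2), (7, 0, 0), (0, 2, 6), (6, 0, 2), (0, 4, 5), (3, 3, 3), (5, 0, 4), (0, 6, 4), (1, 1, 8), (2, 3, 5), (3, 5, 2), (4, 0, 6), (5, 2, 3), (8, 1, 1), (0, 1, 10), (0, 8, 3), (1, 3, 7), (2, 5, 4), (3, 0, 8), (3, 7, 1)} :: (nat \<times> nat \<times> nat) set) = 31" by simp
  then show ?thesis using card_mono[OF fin sub] by simp
qed

lemma leaf3:
  assumes h0: "G 10 0 1 = 0" and h1: "G 1 1 1 = 0" and h2: "0 < G 8 3 0"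
  shows "31 \<le> card (supp3 G)"
proof -

  have p_3_0_1: "0 < G 3 0 1" using h0 h1 h2 v_1_1_1 v_3_0_1 nn[of 10 0 1] by linarith

  have p_0_3_2: "0 < G 0 3 2" using h0 h1 h2 v_0_3_2 v_1_1_1  by linarith

  have p_2_0_3: "0 < G 2 0 3" using h0 h1 h2 v_1_1_1 v_2_0_3  by linarith

  have p_3_2_0: "0 < G 3 2 0" using h0 h1 h2 v_1_1_1 v_3_2_0  by linarith

  have p_0_5_1: "0 < G 0 5 1" using h0 h1 h2 v_0_5_1 v_1_1_1  by linarith

  have p_1_0_5: "0 < G 1 0 5" using h0 h1 h2 v_1_0_5 v_1_1_1  by linarith

  have p_2_2_2: "0 < G 2 2 2" using h0 h1 h2 v_1_1_1 v_2_2_2 nn[of 1 1 1] by linarith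

  have p_5_1_0: "0 < G 5 1 0" using h0 h1 h2 v_1_1_1 v_5_1_0  by linarith

  have p_0_0_7: "0 < G 0 0 7" using h0 h1 h2 v_0_0_7 v_1_1_1  by linarith

  have p_0_7_0: "0 < G 0 7 0" using h0 h1 h2 v_0_7_0 v_1_1_1  by linarith

  have p_1_2_4: "0 < G 1 2 4" using h0 h1 h2 v_1_1_1 v_1_2_4 v_2_1_6 nn[of 2 1 6] by linarith

  have p_2_4_1: "0 < G 2 4 1" using h0 h1 h2 v_1_1_1 v_1_6_2 v_2_4_1 nn[of 1 6 2] by linarith

  have p_4_1_2: "0 < G 4 1 2" using h0 h1 h2 v_1_1_1 v_4_1_2 v_6_2_1 nn[of 6 2 1] by linarith

  have p_7_0_0: "0 < G 7 0 0" using h0 h1 h2 v_1_1_1 v_7_0_0  by linarith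

  have p_1_4_3: "0 < G 1 4 3" using h0 h1 h2 v_1_1_1 v_1_4_3 v_2_3_5 nn[of 2 3 5] nn[of 1 1 1] by linarith

  have p_2_6_0: "0 < G 2 6 0" using h0 h1 h2 v_1_1_1 v_2_6_0 nn[of 8 3 0] by linarith

  have p_3_1_4: "0 < G 3 1 4" using h0 h1 h2 v_1_1_1 v_3_1_4 v_5_2_3 nn[of 5 2 3] nn[of 1 1 1] by linarith

  have p_4_3_1: "0 < G 4 3 1" using h0 h1 h2 v_1_1_1 v_3_5_2 v_4_3_1 nn[of 3 5 2] nn[of 1 1 1] by linarith

  have p_1_6_2: "0 < G 1 6 2" using h0 h1 h2 v_1_1_1 v_1_6_2 v_2_6_0 nn[of 2 6 0] nn[of 1 1 1] by linarith

  have p_2_1_6: "0 < G 2 1 6" using h0 h1 h2 v_0_2_6 v_1_1_1 v_2_1_6 nn[of 0 2 6] nn[of 1 1 1] by linarith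

  have p_3_3_3: "0 < G 3 3 3" using h0 h1 h2 v_0_2_6 v_1_1_1 v_3_3_3 v_6_2_1 nn[of 0 2 6] nn[of 6 2 1] nn[of 8 3 0] by linarith

  have p_4_5_0: "0 < G 4 5 0" using h0 h1 h2 v_1_1_1 v_4_5_0 nn[of 8 3 0] by linarith

  have p_6_2_1: "0 < G 6 2 1" using h0 h1 h2 v_1_1_1 v_6_0_2 v_6_2_1 nn[of 6 0 2] nn[of 1 1 1] by linarith

  have p_1_1_8: "0 < G 1 1 8" using h0 h1 h2 v_0_2_6 v_1_1_1 v_1_1_8 nn[of 0 2 6] nn[of 1 1 1] by linarith

  have p_1_8_1: "0 < G 1 8 1" using h0 h1 h2 v_1_1_1 v_1_8_1 v_2_6_0 nn[of 2 6 0] nn[of 1 1 1] by linarith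

  have p_2_3_5: "0 < G 2 3 5" using h0 h1 h2 v_1_1_1 v_2_3_5 v_2_5_4 nn[of 2 5 4] nn[of 1 1 1] by linarith

  have p_3_5_2: "0 < G 3 5 2" using h0 h1 h2 v_1_1_1 v_3_5_2 v_5_4_2 nn[of 5 4 2] nn[of 1 1 1] by linarith

  have p_5_2_3: "0 < G 5 2 3" using h0 h1 h2 v_1_1_1 v_4_2_5 v_5_2_3 nn[of 4 2 5] nn[of 1 1 1] by linarith

  have p_6_4_0: "0 < G 6 4 0" using h0 h1 h2 v_1_1_1 v_6_4_0 nn[of 8 3 0] by linarith

  have p_8_1_1: "0 < G 8 1 1" using h0 h1 h2 v_1_1_1 v_6_0_2 nn[of 6 0 2] nn[of 1 1 1] by linarith

  have p_1_3_7: "0 < G 1 3 7" using h0 h1 h2 v_0_2_6 v_1_1_1 v_1_3_7 nn[of 0 2 6] nn[of 8 3 0] by linarith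

  have sub: "({(3, 0, 1), (0, 3, 2), (2, 0, 3), (3, 2, 0), (0, 5, 1), (1, 0, 5), (2, 2, 2), (5, 1, 0), (0, 0, 7), (0, 7, 0), (1, 2, 4), (2, 4, 1), (4, 1, 2), (7, 0, 0), (1, 4, 3), (2, 6, 0), (3, 1, 4), (4, 3, 1), (1, 6, 2), (2, 1, 6), (3, 3, 3), (4, 5, 0), (6, 2, 1), (1, 1, 8), (1, 8, 1), (2, 3, 5), (3, 5, 2), (5, 2, 3), (6, 4, 0), (8, 1, 1), (1, 3, 7)} :: (nat \<times> nat \<times> nat) set) \<subseteq> supp3 G"
    using p_3_0_1[THEN less_imp_neq, THEN not_sym] p_0_3_2[THEN less_imp_neq, THEN not_sym] p_2_0_3[THEN less_imp_neq, THEN not_sym] p_3_2_0[THEN less_imp_neq, THEN not_sym] p_0_5_1[THEN less_imp_neq, THEN not_sym] p_1_0_5[THEN less_imp_neq, THEN not_sym] p_2_2_2[THEN less_imp_neq, THEN not_sym] p_5_1_0[THEN less_imp_neq, THEN not_sym] p_0_0_7[THEN less_imp_neq, THEN not_sym] p_0_7_0[THEN less_imp_neq, THEN not_sym] p_1_2_4[THEN less_imp_neq, THEN not_sym] p_2_4_1[THEN less_imp_neq, THEN not_sym] p_4_1_2[THEN less_imp_neq, THEN not_sym] p_7_0_0[THEN less_imp_neq, THEN not_sym] p_1_4_3[THEN less_imp_neq, THEN not_sym] p_2_6_0[THEN less_imp_neq, THEN not_sym] p_3_1_4[THEN less_imp_neq, THEN not_sym] p_4_3_1[THEN less_imp_neq,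 THEN not_sym] p_1_6_2[THEN less_imp_neq, THEN not_sym] p_2_1_6[THEN less_imp_neq, THEN not_sym] p_3_3_3[THEN less_imp_neq, THEN not_sym] p_4_5_0[THEN less_imp_neq, THEN not_sym] p_6_2_1[THEN less_imp_neq, THEN not_sym] p_1_1_8[THEN less_imp_neq, THEN not_sym] p_1_8_1[THEN less_imp_neq, THEN not_sym] p_2_3_5[THEN less_imp_neq, THEN not_sym] p_3_5_2[THEN less_imp_neq, THEN not_sym] p_5_2_3[THEN less_imp_neq, THEN not_sym] p_6_4_0[THEN less_imp_neq, THEN not_sym] p_8_1_1[THEN less_imp_neq, THEN not_sym] p_1_3_7[THEN less_imp_neq, THEN not_sym] by (simp add: supp3_def)

  have "card ({(3, 0, 1), (0, 3, 2), (2, 0, 3), (3, 2, 0), (0, 5, 1), (1, 0, 5), (2, 2, 2), (5, 1, 0), (0, 0, 7), (0, 7, 0), (1, 2, 4), (2, 4, 1), (4, 1, 2), (7, 0, 0), (1, 4, 3), (2, 6, 0), (3, 1, 4), (4, 3, 1), (1, 6, 2), (2, 1, 6), (3, 3, 3), (4, 5, 0), (6, 2, 1), (1, 1, 8), (1, 8, 1), (2, 3, 5), (3, 5, 2), (5, 2, 3), (6, 4, 0), (8, 1, 1), (1, 3, 7)} :: (nat \<times> nat \<times> nat) set) = 31" by simp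
  then show ?thesis using card_mono[OF fin sub] by simp
qed

lemma leaf4:
  assumes h0: "G 10 0 1 = 0" and h1: "0 < G 8 3 0" and h2: "0 < G 1 1 1"
  shows "31 \<le> card (supp3 G)"
proof -

  have p_1_1_1: "0 < G 1 1 1" using h0 h1 h2 v_1_1_1 nn[of 1 1 1] by linarith

  have p_3_0_1: "0 < G 3 0 1" using h0 h1 h2 v_1_1_1 v_3_0_1 nn[of 10 0 1] by linarith

  have p_0_3_2: "0 < G 0 3 2" using h0 h1 h2 v_0_3_2 v_1_1_1  by linarith

  have p_2_0_3: "0 < G 2 0 3" using h0 h1 h2 v_1_1_1 v_2_0_3  by linarith

  have p_3_2_0: "0 < G 3 2 0" using h0 h1 h2 v_1_1_1 v_3_2_0  by linarith

  have p_0_5_1: "0 < G 0 5 1" using h0 h1 h2 v_0_5_1 v_1_1_1  by linarith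

  have p_1_0_5: "0 < G 1 0 5" using h0 h1 h2 v_1_0_5 v_1_1_1  by linarith

  have p_2_2_2: "0 < G 2 2 2" using h0 h1 h2 v_1_1_1 v_2_2_2 v_6_2_1 nn[of 6 2 1] nn[of 10 0 1] by linarith

  have p_5_1_0: "0 < G 5 1 0" using h0 h1 h2 v_1_1_1 v_5_1_0  by linarith

  have p_0_0_7: "0 < G 0 0 7" using h0 h1 h2 v_0_0_7 v_1_1_1  by linarith

  have p_0_7_0: "0 < G 0 7 0" using h0 h1 h2 v_0_7_0 v_1_1_1  by linarith

  have p_1_2_4: "0 < G 1 2 4" using h0 h1 h2 v_1_1_1 v_1_2_4 v_2_1_6 nn[of 2 1 6] by linarith

  have p_2_4_1: "0 < G 2 4 1" using h0 h1 h2 v_1_1_1 v_1_6_2 v_2_4_1 nn[of 1 6 2] by linarith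

  have p_4_1_2: "0 < G 4 1 2" using h0 h1 h2 v_1_1_1 v_4_1_2 v_6_2_1 nn[of 6 2 1] by linarith

  have p_7_0_0: "0 < G 7 0 0" using h0 h1 h2 v_1_1_1 v_7_0_0  by linarith

  have p_1_4_3: "0 < G 1 4 3" using h0 h1 h2 v_1_1_1 v_1_4_3 v_3_1_4 nn[of 3 1 4] nn[of 10 0 1] nn[of 8 3 0] by linarith

  have p_2_6_0: "0 < G 2 6 0" using h0 h1 h2 v_1_1_1 v_2_6_0 nn[of 8 3 0] by linarith

  have p_4_3_1: "0 < G 4 3 1" using h0 h1 h2 v_1_1_1 v_4_3_1 v_6_2_1 nn[of 6 2 1] nn[of 10 0 1] nn[of 8 3 0] by linarith

  have p_1_6_2: "0 < G 1 6 2" using h0 h1 h2 v_1_1_1 v_1_6_2 v_4_3_1 nn[of 4 3 1] nn[of 10 0 1] nn[of 8 3 0] by linarith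

  have p_3_3_3: "0 < G 3 3 3" using h0 h1 h2 v_0_2_6 v_1_1_1 v_3_3_3 v_6_2_1 nn[of 0 2 6] nn[of 6 2 1] nn[of 8 3 0] by linarith

  have p_4_5_0: "0 < G 4 5 0" using h0 h1 h2 v_1_1_1 v_4_5_0 nn[of 8 3 0] by linarith

  have p_1_8_1: "0 < G 1 8 1" using h0 h1 h2 v_1_1_1 v_1_6_2 v_1_8_1 nn[of 1 6 2] nn[of 8 3 0] by linarith

  have p_2_3_5: "0 < G 2 3 5" using h0 h1 h2 v_0_2_6 v_1_1_1 v_1_4_3 v_2_3_5 nn[of 0 2 6] nn[of 1 4 3] nn[of 8 3 0] by linarith

  have p_3_5_2: "0 < G 3 5 2" using h0 h1 h2 v_1_1_1 v_3_5_2 v_4_3_1 v_6_0_2 nn[of 4 3 1] nn[of 6 0 2] nn[of 8 3 0] by linarith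

  have p_6_4_0: "0 < G 6 4 0" using h0 h1 h2 v_1_1_1 v_6_4_0 nn[of 8 3 0] by linarith

  have p_1_3_7: "0 < G 1 3 7" using h0 h1 h2 v_0_2_6 v_1_1_1 v_1_3_7 nn[of 0 2 6] nn[of 8 3 0] by linarith

  have p_1_10_0: "0 < G 1 10 0" using h0 h1 h2 v_1_1_1 v_1_10_0 nn[of 8 3 0] by linarith

  have p_2_5_4: "0 < G 2 5 4" using h0 h1 h2 v_0_2_6 v_1_1_1 v_2_5_4 nn[of 0 2 6] nn[of 8 3 0] by linarith

  have p_3_7_1: "0 < G 3 7 1" using h0 h1 h2 v_1_1_1 v_3_7_1 v_6_0_2 nn[of 6 0 2] nn[of 8 3 0] by linarith

  have p_5_4_2: "0 < G 5 4 2" using h0 h1 h2 v_1_1_1 v_5_4_2 v_6_0_2 nn[of 6 0 2] nn[of 8 3 0] by linarith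

  have p_8_3_0: "0 < G 8 3 0" using h0 h1 h2 v_1_1_1 nn[of 8 3 0] by linarith

  have sub: "({(1, 1, 1), (3, 0, 1), (0, 3, 2), (2, 0, 3), (3, 2, 0), (0, 5, 1), (1, 0, 5), (2, 2, 2), (5, 1, 0), (0, 0, 7), (0, 7, 0), (1, 2, 4), (2, 4, 1), (4, 1, 2), (7, 0, 0), (1, 4, 3), (2, 6, 0), (4, 3, 1), (1, 6, 2), (3, 3, 3), (4, 5, 0), (1, 8, 1), (2, 3, 5), (3, 5, 2), (6, 4, 0), (1, 3, 7), (1, 10, 0), (2, 5, 4), (3, 7, 1), (5, 4, 2), (8, 3, 0)} :: (nat \<times> nat \<times> nat) set) \<subseteq> supp3 G"
    using p_1_1_1[THEN less_imp_neq, THEN not_sym] p_3_0_1[THEN less_imp_neq, THEN not_sym] p_0_3_2[THEN less_imp_neq, THEN not_sym] p_2_0_3[THEN less_imp_neq, THEN not_sym] p_3_2_0[THEN less_imp_neq, THEN not_sym] p_0_5_1[THEN less_imp_neq, THEN not_sym] p_1_0_5[THEN less_imp_neq, THEN not_sym] p_2_2_2[THEN less_imp_neq, THEN not_sym] p_5_1_0[THEN less_imp_neq, THEN not_sym] p_0_0_7[THEN less_imp_neq, THEN not_sym] p_0_7_0[THEN less_imp_neq, THEN not_sym] p_1_2_4[THEN less_imp_neq, THEN not_sym] p_2_4_1[THEN less_imp_neq, THEN not_sym] p_4_1_2[THEN less_imp_neq, THEN not_sym] p_7_0_0[THEN less_imp_neq, THEN not_sym] p_1_4_3[THEN less_imp_neq,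 THEN not_sym] p_2_6_0[THEN less_imp_neq, THEN not_sym] p_4_3_1[THEN less_imp_neq, THEN not_sym] p_1_6_2[THEN less_imp_neq, THEN not_sym] p_3_3_3[THEN less_imp_neq, THEN not_sym] p_4_5_0[THEN less_imp_neq, THEN not_sym] p_1_8_1[THEN less_imp_neq, THEN not_sym] p_2_3_5[THEN less_imp_neq, THEN not_sym] p_3_5_2[THEN less_imp_neq, THEN not_sym] p_6_4_0[THEN less_imp_neq, THEN not_sym] p_1_3_7[THEN less_imp_neq, THEN not_sym] p_1_10_0[THEN less_imp_neq, THEN not_sym] p_2_5_4[THEN less_imp_neq, THEN not_sym] p_3_7_1[THEN less_imp_neq, THEN not_sym] p_5_4_2[THEN less_imp_neq, THEN not_sym] p_8_3_0[THEN less_imp_neq, THEN not_sym] by (simp add: supp3_def)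

  have "card ({(1, 1, 1), (3, 0, 1), (0, 3, 2), (2, 0, 3), (3, 2, 0), (0, 5, 1), (1, 0, 5), (2, 2, 2), (5, 1, 0), (0, 0, 7), (0, 7, 0), (1, 2, 4), (2, 4, 1), (4, 1, 2), (7, 0, 0), (1, 4, 3), (2, 6, 0), (4, 3, 1), (1, 6, 2), (3, 3, 3), (4, 5, 0), (1, 8, 1), (2, 3, 5), (3, 5, 2), (6, 4, 0), (1, 3, 7), (1, 10, 0), (2, 5, 4), (3, 7, 1), (5, 4, 2), (8, 3, 0)} :: (nat \<times> nat \<times> nat) set) = 31" by simp
  then show ?thesis using card_mono[OF fin sub] by simp
qed

lemma leaf5:
  assumes h0: "G 10 0 1 = 0" and h1: "G 8 3 0 = 0" and h2: "0 < G 0 1 10"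
  shows "31 \<le> card (supp3 G)"
proof -

  have p_1_3_0: "0 < G 1 3 0" using h0 h1 h2 v_0_1_10 v_1_3_0 nn[of 8 3 0] by linarith

  have p_3_0_1: "0 < G 3 0 1" using h0 h1 h2 v_0_1_10 v_3_0_1 nn[of 10 0 1] by linarith

  have p_0_3_2: "0 < G 0 3 2" using h0 h1 h2 v_0_1_10 v_0_3_2  by linarith

  have p_2_0_3: "0 < G 2 0 3" using h0 h1 h2 v_0_1_10 v_2_0_3  by linarith

  have p_3_2_0: "0 < G 3 2 0" using h0 h1 h2 v_0_1_10 v_3_2_0  by linarith

  have p_0_5_1: "0 < G 0 5 1" using h0 h1 h2 v_0_1_10 v_0_5_1  by linarith

  have p_1_0_5: "0 < G 1 0 5" using h0 h1 h2 v_0_1_10 v_1_0_5  by linarith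

  have p_2_2_2: "0 < G 2 2 2" using h0 h1 h2 v_0_1_10 v_1_6_2 v_2_2_2 nn[of 1 6 2] nn[of 8 3 0] by linarith

  have p_5_1_0: "0 < G 5 1 0" using h0 h1 h2 v_0_1_10 v_5_1_0  by linarith

  have p_0_0_7: "0 < G 0 0 7" using h0 h1 h2 v_0_0_7 v_0_1_10  by linarith

  have p_0_7_0: "0 < G 0 7 0" using h0 h1 h2 v_0_1_10 v_0_7_0  by linarith

  have p_1_2_4: "0 < G 1 2 4" using h0 h1 h2 v_0_1_10 v_1_2_4 v_2_1_6 nn[of 2 1 6] by linarith

  have p_2_4_1: "0 < G 2 4 1" using h0 h1 h2 v_0_1_10 v_1_6_2 v_2_4_1 nn[of 1 6 2] by linarith

  have p_4_1_2: "0 < G 4 1 2" using h0 h1 h2 v_0_1_10 v_4_1_2 v_6_2_1 nn[of 6 2 1] by linarith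

  have p_7_0_0: "0 < G 7 0 0" using h0 h1 h2 v_0_1_10 v_7_0_0  by linarith

  have p_0_2_6: "0 < G 0 2 6" using h0 h1 h2 v_0_1_10 v_0_2_6 nn[of 0 1 10] by linarith

  have p_1_4_3: "0 < G 1 4 3" using h0 h1 h2 v_0_1_10 v_1_4_3 v_4_3_1 nn[of 4 3 1] nn[of 10 0 1] nn[of 0 1 10] by linarith

  have p_3_1_4: "0 < G 3 1 4" using h0 h1 h2 v_0_1_10 v_3_1_4 v_4_3_1 nn[of 4 3 1] nn[of 8 3 0] nn[of 0 1 10] by linarith

  have p_0_4_5: "0 < G 0 4 5" using h0 h1 h2 v_0_1_10 v_0_4_5 nn[of 0 1 10] by linarith

  have p_2_1_6: "0 < G 2 1 6" using h0 h1 h2 v_0_1_10 v_1_4_3 v_2_1_6 nn[of 1 4 3] nn[of 8 3 0] nn[of 0 1 10] by linarith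

  have p_3_3_3: "0 < G 3 3 3" using h0 h1 h2 v_0_1_10 v_2_6_0 v_3_3_3 v_6_2_1 nn[of 2 6 0] nn[of 6 2 1] nn[of 0 1 10] by linarith

  have p_0_6_4: "0 < G 0 6 4" using h0 h1 h2 v_0_1_10 v_0_6_4 nn[of 0 1 10] by linarith

  have p_1_1_8: "0 < G 1 1 8" using h0 h1 h2 v_0_1_10 v_1_1_8 v_2_1_6 nn[of 2 1 6] nn[of 0 1 10] by linarith

  have p_2_3_5: "0 < G 2 3 5" using h0 h1 h2 v_0_1_10 v_1_4_3 v_2_3_5 v_2_6_0 nn[of 1 4 3] nn[of 2 6 0] nn[of 0 1 10] by linarith

  have p_5_2_3: "0 < G 5 2 3" using h0 h1 h2 v_0_1_10 v_3_1_4 v_5_2_3 v_6_0_2 nn[of 3 1 4] nn[of 6 0 2] nn[of 0 1 10] by linarith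

  have p_0_1_10: "0 < G 0 1 10" using h0 h1 h2 v_0_1_10 nn[of 0 1 10] by linarith

  have p_0_8_3: "0 < G 0 8 3" using h0 h1 h2 v_0_1_10 v_0_8_3 nn[of 0 1 10] by linarith

  have p_1_3_7: "0 < G 1 3 7" using h0 h1 h2 v_0_1_10 v_1_3_7 v_2_6_0 nn[of 2 6 0] nn[of 0 1 10] by linarith

  have p_2_5_4: "0 < G 2 5 4" using h0 h1 h2 v_0_1_10 v_2_5_4 v_2_6_0 nn[of 2 6 0] nn[of 0 1 10] by linarith

  have p_4_2_5: "0 < G 4 2 5" using h0 h1 h2 v_0_1_10 v_4_2_5 v_6_0_2 nn[of 6 0 2] nn[of 0 1 10] by linarith

  have p_7_1_3: "0 < G 7 1 3" using h0 h1 h2 v_0_1_10 v_6_0_2 nn[of 6 0 2] nn[of 0 1 10] by linarith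

  have sub: "({(1, 3, 0), (3, 0, 1), (0, 3, 2), (2, 0, 3), (3, 2, 0), (0, 5, 1), (1, 0, 5), (2, 2, 2), (5, 1, 0), (0, 0, 7), (0, 7, 0), (1, 2, 4), (2, 4, 1), (4, 1, 2), (7, 0, 0), (0, 2, 6), (1, 4, 3), (3, 1, 4), (0, 4, 5), (2, 1, 6), (3, 3, 3), (0, 6, 4), (1, 1, 8), (2, 3, 5), (5, 2, 3), (0, 1, 10), (0, 8, 3), (1, 3, 7), (2, 5, 4), (4, 2, 5), (7, 1, 3)} :: (nat \<times> nat \<times> nat) set) \<subseteq> supp3 G"
    using p_1_3_0[THEN less_imp_neq, THEN not_sym] p_3_0_1[THEN less_imp_neq, THEN not_sym] p_0_3_2[THEN less_imp_neq, THEN not_sym] p_2_0_3[THEN less_imp_neq, THEN not_sym] p_3_2_0[THEN less_imp_neq, THEN not_sym] p_0_5_1[THEN less_imp_neq, THEN not_sym] p_1_0_5[THEN less_imp_neq, THEN not_sym] p_2_2_2[THEN less_imp_neq, THEN not_sym] p_5_1_0[THEN less_imp_neq, THEN not_sym] p_0_0_7[THEN less_imp_neq, THEN not_sym] p_0_7_0[THEN less_imp_neq, THEN not_sym] p_1_2_4[THEN less_imp_neq, THEN not_sym] p_2_4_1[THEN less_imp_neq, THEN not_sym] p_4_1_2[THEN less_imp_neq, THEN not_sym] p_7_0_0[THEN less_imp_neq, THEN not_sym] p_0_2_6[THEN less_imp_neq, THEN not_sym] p_1_4_3[THEN less_imp_neq, THEN not_sym] p_3_1_4[THEN less_imp_neq,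 THEN not_sym] p_0_4_5[THEN less_imp_neq, THEN not_sym] p_2_1_6[THEN less_imp_neq, THEN not_sym] p_3_3_3[THEN less_imp_neq, THEN not_sym] p_0_6_4[THEN less_imp_neq, THEN not_sym] p_1_1_8[THEN less_imp_neq, THEN not_sym] p_2_3_5[THEN less_imp_neq, THEN not_sym] p_5_2_3[THEN less_imp_neq, THEN not_sym] p_0_1_10[THEN less_imp_neq, THEN not_sym] p_0_8_3[THEN less_imp_neq, THEN not_sym] p_1_3_7[THEN less_imp_neq, THEN not_sym] p_2_5_4[THEN less_imp_neq, THEN not_sym] p_4_2_5[THEN less_imp_neq, THEN not_sym] p_7_1_3[THEN less_imp_neq, THEN not_sym] by (simp add: supp3_def)

  have "card ({(1, 3, 0), (3, 0, 1), (0, 3, 2), (2, 0, 3), (3, 2, 0), (0, 5, 1), (1, 0, 5), (2, 2, 2), (5, 1, 0), (0, 0, 7), (0, 7, 0), (1, 2, 4), (2, 4, 1), (4, 1, 2), (7, 0, 0), (0, 2, 6), (1, 4, 3), (3, 1, 4), (0, 4, 5), (2, 1, 6), (3, 3, 3), (0, 6, 4), (1, 1, 8), (2, 3, 5), (5, 2, 3), (0, 1, 10), (0, 8, 3), (1, 3, 7), (2, 5, 4), (4, 2, 5), (7, 1, 3)} :: (nat \<times> nat \<times> nat) set) = 31" by simp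
  then show ?thesis using card_mono[OF fin sub] by simp
qed

lemma deg11:
  assumes m: "(i, j, k) \<in> supp3 G" and d: "i + j + k = 11"
  shows "31 \<le> card (supp3 G)"
proof -
  have mem: "(i, j, k) \<in> M11" using m Msub by blast
  have nz: "G i j k \<noteq> 0" using m by (simp add: supp3_def)
  have "G 10 0 1 \<noteq> 0 \<or> G 8 3 0 \<noteq> 0 \<or> G 0 1 10 \<noteq> 0"
  proof (rule ccontr)
    assume "\<not> (G 10 0 1 \<noteq> 0 \<or> G 8 3 0 \<noteq> 0 \<or> G 0 1 10 \<noteq> 0)"
    then have zf: "G 10 0 1 = 0" and ze: "G 8 3 0 = 0" and zB: "G 0 1 10 = 0" by auto
    have zb: "G 7 1 3 = 0" using v_0_1_10 zf zB by simp
    have all0: "\<forall>(i, j, k)\<in>M11. G i j k = 0 \<or> i + j + k \<noteq> 11"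
      unfolding M11_def using zf ze zb by (simp add: vals del: One_nat_def)
    show False using bspec[OF all0 mem] nz d by simp
  qed
  then have top: "0 < G 10 0 1 \<or> (G 10 0 1 = 0 \<and> 0 < G 8 3 0) \<or> (G 10 0 1 = 0 \<and> G 8 3 0 = 0 \<and> 0 < G 0 1 10)"
    using nn[of 10 0 1] nn[of 8 3 0] nn[of 0 1 10] by (auto simp: less_le)
  have s111: "G 1 1 1 = 0 \<or> 0 < G 1 1 1" using nn[of 1 1 1] by (auto simp: less_le)
  have s026: "G 0 2 6 = 0 \<or> 0 < G 0 2 6" using nn[of 0 2 6] by (auto simp: less_le)
  show ?thesis using top s111 s026 leaf0 leaf1 leaf2 leaf3 leaf4 leaf5 by blast
qed

end


lemma deg_facts:
  assumes sp: "special \<eta> G"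
  shows "(\<And>i j k. (i, j, k) \<in> supp3 G \<Longrightarrow> i + j + k \<le> deg3 G)"
    and "\<exists>i j k. (i, j, k) \<in> supp3 G \<and> i + j + k = deg3 G"
proof -
  have fin: "finite (supp3 G)" using sp by (simp add: special_def is_poly3_def)
  have ne: "supp3 G \<noteq> {}"
  proof
    assume e: "supp3 G = {}"
    have "eval3 G (1::real) 0 0 = 1" using sp by (simp add: special_def)
    moreover have "eval3 G (1::real) 0 0 = 0" unfolding eval3_def e by simp
    ultimately show False by simp
  qed
  let ?f = "\<lambda>(i::nat, j::nat, k::nat). i + j + k"
  have finI: "finite (?f ` supp3 G)" using fin by simp
  show "i + j + k \<le> deg3 G" if "(i, j, k) \<in> supp3 G" for i j k
  proof -
    have "?f (i, j, k) \<le> Max (?f ` supp3 G)" by (rule Max_ge[OF finI imageI[OF that]])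
    then show ?thesis unfolding deg3_def by simp
  qed
  have "Max (?f ` supp3 G) \<in> ?f ` supp3 G" by (rule Max_in[OF finI]) (use ne in simp)
  then obtain m where "m \<in> supp3 G" "?f m = Max (?f ` supp3 G)" by force
  then show "\<exists>i j k. (i, j, k) \<in> supp3 G \<and> i + j + k = deg3 G"
    unfolding deg3_def by (cases m) auto
qed

theorem proposition5p1:
  fixes \<eta> :: complex
  assumes "\<eta> ^ 7 = 1" and "\<eta> \<noteq> 1"
  shows "(\<forall>G. special \<eta> G \<and> deg3 G = 7 \<longrightarrow> N3 G = 17)
       \<and> (\<nexists>G. special \<eta> G \<and> (deg3 G = 8 \<or> deg3 G = 9))
       \<and> (\<forall>G. special \<eta> G \<and> deg3 G = 10 \<longrightarrow> N3 G = 29 \<or> N3 G = 30)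
       \<and> (\<forall>G. special \<eta> G \<and> deg3 G = 11 \<longrightarrow> N3 G \<ge> 31)"
proof (intro conjI allI impI)
  fix G assume a: "special \<eta> G \<and> deg3 G = 7"
  have dl: "\<And>i j k. (i, j, k) \<in> supp3 G \<Longrightarrow> i + j + k \<le> 7" using deg_facts(1)[of \<eta> G] a by auto
  have spG: "special \<eta> G" using a by simp
  have "sp11 G" by (rule special_sp11[OF spG assms]) (drule dl, simp)
  then show "N3 G = 17" unfolding N3_def using sp11.deg7[OF _ dl] by blast
next
  show "\<nexists>G. special \<eta> G \<and> (deg3 G = 8 \<or> deg3 G = 9)"
  proof
    assume "\<exists>G. special \<eta> G \<and> (deg3 G = 8 \<or> deg3 G = 9)"
    then obtain G where a: "special \<eta> G" "deg3 G = 8 \<or> deg3 G = 9" by blast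
    have dl: "\<And>i j k. (i, j, k) \<in> supp3 G \<Longrightarrow> i + j + k \<le> 9" using deg_facts(1)[of \<eta> G] a by fastforce
    obtain i j k where m: "(i, j, k) \<in> supp3 G" "i + j + k = deg3 G" using deg_facts(2)[OF a(1)] by blast
    have "sp11 G" by (rule special_sp11[OF a(1) assms]) (drule dl, simp)
    then show False using sp11.deg89[OF _ dl m(1)] m(2) a(2) by auto
  qed
next
  fix G assume a: "special \<eta> G \<and> deg3 G = 10"
  have dl: "\<And>i j k. (i, j, k) \<in> supp3 G \<Longrightarrow> i + j + k \<le> 10" using deg_facts(1)[of \<eta> G] a by auto
  obtain i j k where m: "(i, j, k) \<in> supp3 G" "i + j + k = deg3 G" using deg_facts(2)[of \<eta> G] a by blast
  have spG: "special \<eta> G" using a by simp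
  have "sp11 G" by (rule special_sp11[OF spG assms]) (drule dl, simp)
  then show "N3 G = 29 \<or> N3 G = 30" unfolding N3_def using sp11.deg10[OF _ dl m(1)] m(2) a by auto
next
  fix G assume a: "special \<eta> G \<and> deg3 G = 11"
  have dl: "\<And>i j k. (i, j, k) \<in> supp3 G \<Longrightarrow> i + j + k \<le> 11" using deg_facts(1)[of \<eta> G] a by auto
  obtain i j k where m: "(i, j, k) \<in> supp3 G" "i + j + k = deg3 G" using deg_facts(2)[of \<eta> G] a by blast
  have spG: "special \<eta> G" using a by simp
  have "sp11 G" by (rule special_sp11[OF spG assms]) (drule dl, simp)
  then show "N3 G \<ge> 31" unfolding N3_def using sp11.deg11[OF _ m(1)] m(2) a by auto
qed


end
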